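(* Let $d\ge3$, $n_1,\dots,n_d,k$ positive integers, $\mathfrak{L}$ an invertible linear transform as in the context, $\tau>0$, $0<p<1$ and $w=(w_{i,j})$ nonnegative weights. Let $\boldsymbol{\mathcal{A}}=\boldsymbol{\mathcal{Q}}*_{\mathfrak{L}}\boldsymbol{\mathcal{B}}\in\mathbb{R}^{n_1\times n_2\times n_3\times\cdots\times n_d}$, where $\boldsymbol{\mathcal{Q}}\in\mathbb{R}^{n_1\times k\times n_3\times\cdots\times n_d}$ is partially orthogonal and $\boldsymbol{\mathcal{B}}\in\mathbb{R}^{k\times n_2\times n_3\times\cdots\times n_d}$. Then $$\boldsymbol{\mathcal{D}}_{\boldsymbol{\mathcal{W}},p,\tau}(\boldsymbol{\mathcal{A}})=\boldsymbol{\mathcal{Q}}*_{\mathfrak{L}}\boldsymbol{\mathcal{D}}_{\boldsymbol{\mathcal{W}},p,\tau}(\boldsymbol{\mathcal{B}}).$$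
   Context: Transform: for $i=3,\dots,d$ let $\bm U_{n_i}\in\mathbb{C}^{n_i\times n_i}$ satisfy $\bm U_{n_i}\bm U_{n_i}^H=\bm U_{n_i}^H\bm U_{n_i}=\alpha_i\bm I_{n_i}$, $\alpha_i>0$. For a tensor $\boldsymbol{\mathcal{A}}$ of size $m_1\times m_2\times n_3\times\cdots\times n_d$, $\mathfrak{L}(\boldsymbol{\mathcal{A}})=\boldsymbol{\mathcal{A}}\times_3\bm U_{n_3}\cdots\times_d\bm U_{n_d}$ (mode-$k$ product $\boldsymbol{\mathcal{B}}=\boldsymbol{\mathcal{A}}\times_k\bm M$ iff $\bm B_{(k)}=\bm M\bm A_{(k)}$), with inverse $\mathfrak{L}^{-1}$. Frontal slices $\boldsymbol{\mathcal{A}}^{<j>}=\boldsymbol{\mathcal{A}}(:,:,i_3,\dots,i_d)$, $j=i_3+\sum_{a=4}^d(i_a-1)\prod_{b=3}^{a-1}n_b\in\{1,\dots,N\}$, $N=n_3\cdots n_d$. t-product: $\boldsymbol{\mathcal{C}}=\boldsymbol{\mathcal{A}}*_{\mathfrak{L}}\boldsymbol{\mathcal{B}}$ iff $\mathfrak{L}(\boldsymbol{\mathcal{C}})^{<j>}=\mathfrak{L}(\boldsymbol{\mathcal{A}})^{<j>}\mathfrak{L}(\boldsymbol{\mathcal{B}})^{<j>}$ for all $j$. Transpose: $\mathfrak{L}(\boldsymbol{\mathcal{A}}^T)^{<j>}=(\mathfrak{L}(\boldsymbol{\mathcal{A}})^{<j>})^H$. Identity tensor: $\mathfrak{L}(\boldsymbol{\mathcal{I}})^{<j>}=\bm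 I$ for all $j$. $\boldsymbol{\mathcal{Q}}$ is partially orthogonal if $\boldsymbol{\mathcal{Q}}^T*_{\mathfrak{L}}\boldsymbol{\mathcal{Q}}=\boldsymbol{\mathcal{I}}$, orthogonal if also $\boldsymbol{\mathcal{Q}}*_{\mathfrak{L}}\boldsymbol{\mathcal{Q}}^T=\boldsymbol{\mathcal{I}}$. f-diagonal: all frontal slices diagonal. T-SVD: $\boldsymbol{\mathcal{A}}=\boldsymbol{\mathcal{U}}*_{\mathfrak{L}}\boldsymbol{\mathcal{S}}*_{\mathfrak{L}}\boldsymbol{\mathcal{V}}^T$, $\boldsymbol{\mathcal{U}},\boldsymbol{\mathcal{V}}$ orthogonal, $\boldsymbol{\mathcal{S}}$ f-diagonal, obtained from slice-wise SVDs of $\mathfrak{L}(\boldsymbol{\mathcal{A}})^{<j>}$ with singular values in non-increasing order. GST: for $s\in\mathbb{R}$, $w\ge0$, $0<p<1$, $\delta=[2w(1-p)]^{\frac1{2-p}}+wp[2w(1-p)]^{\frac{p-1}{2-p}}$; $\mathrm{GST}(s,w,p)=0$ if $|s|\le\delta$, else $\mathrm{sign}(s)\hat\alpha^*$ with $\hat\alpha^*$ the largest positive root of $\alpha+wp\alpha^{p-1}=|s|$; $\mathrm{GST}(s,0,p)=s$. GTSVT: for a tensor $\boldsymbol{\mathcal{A}}$ of size $m_1\times m_2\times n_3\times\cdots\times n_d$ with T-SVD $\boldsymbol{\mathcal{U}}*_{\mathfrak{L}}\boldsymbol{\mathcal{S}}*_{\mathfrak{L}}\boldsymbol{\mathcal{V}}^T$,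 $\boldsymbol{\mathcal{D}}_{\boldsymbol{\mathcal{W}},p,\tau}(\boldsymbol{\mathcal{A}})=\boldsymbol{\mathcal{U}}*_{\mathfrak{L}}\mathfrak{L}^{-1}(\hat{\boldsymbol{\mathcal{S}}})*_{\mathfrak{L}}\boldsymbol{\mathcal{V}}^T$, where $\hat{\boldsymbol{\mathcal{S}}}$ is f-diagonal with $\hat{\boldsymbol{\mathcal{S}}}^{<j>}(i,i)=\mathrm{GST}\big(\mathfrak{L}(\boldsymbol{\mathcal{S}})^{<j>}(i,i),\tau w_{i,j},p\big)$ for $i\le\min(m_1,m_2)$; here $\boldsymbol{\mathcal{W}}$ denotes the f-diagonal weight tensor with $\boldsymbol{\mathcal{W}}^{<j>}(i,i)=w_{i,j}$, the same weights $w_{i,j}$ being used regardless of the first two dimensions of the argument. *)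

theory Defs
  imports Complex_Main "Jordan_Normal_Form.Matrix"
begin

(* Tensors of size m1 x m2 x n3 x ... x nd are represented as maps from a
   frontal-slice multi-index [i3,...,id] (0-based, i_a < n_a) to the frontal
   slice, an m1 x m2 complex matrix.  ns = [n3,...,nd].  Outside the valid
   index range the value is normalised to the junk value 0_m 0 0. *)

type_synonym tensor = "nat list \<Rightarrow> complex mat"

definition valid_idx :: "nat list \<Rightarrow> nat list \<Rightarrow> bool" where
  "valid_idx ns idx \<longleftrightarrow> length idx = length ns \<and> (\<forall>a<length ns. idx ! a < ns ! a)"

definition is_tensor :: "nat \<Rightarrow> nat \<Rightarrow> nat list \<Rightarrow> tensor \<Rightarrow> bool" where
  "is_tensor m1 m2 ns A \<longleftrightarrow>
     (\<forall>idx. if valid_idx ns idx then A idx \<in> carrier_mat m1 m2 else A idx = 0\<^sub>m 0 0)"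

definition real_tensor :: "nat list \<Rightarrow> tensor \<Rightarrow> bool" where
  "real_tensor ns A \<longleftrightarrow>
     (\<forall>idx. valid_idx ns idx \<longrightarrow>
        (\<forall>i<dim_row (A idx). \<forall>j<dim_col (A idx). A idx $$ (i,j) \<in> \<real>))"

(* 0-based linear frontal-slice index: j - 1 in the paper's notation *)
definition lin_idx :: "nat list \<Rightarrow> nat list \<Rightarrow> nat" where
  "lin_idx ns idx = (\<Sum>a<length ns. idx ! a * (\<Prod>b<a. ns ! b))"

definition ctrans :: "complex mat \<Rightarrow> complex mat" where
  "ctrans M = mat (dim_col M) (dim_row M) (\<lambda>(i,j). cnj (M $$ (j,i)))"

definition unitary_mat :: "nat \<Rightarrow> complex mat \<Rightarrow> bool" where
  "unitary_mat n U \<longleftrightarrow> U \<in> carrier_mat n n \<and> U * ctrans U = 1\<^sub>m n \<and> ctrans U * U = 1\<^sub>m n"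

definition inv_mat :: "complex mat \<Rightarrow> complex mat" where
  "inv_mat U = (THE M. M \<in> carrier_mat (dim_row U) (dim_row U) \<and>
                       U * M = 1\<^sub>m (dim_row U) \<and> M * U = 1\<^sub>m (dim_row U))"

(* mode-(a+3) product  A \<times>_(a+3) M :  B_(a+3) = M A_(a+3) *)
definition mode_prod :: "nat list \<Rightarrow> nat \<Rightarrow> complex mat \<Rightarrow> tensor \<Rightarrow> tensor" where
  "mode_prod ns a M A = (\<lambda>idx. if valid_idx ns idx then
      mat (dim_row (A idx)) (dim_col (A idx))
        (\<lambda>(r,c). \<Sum>l<ns ! a. M $$ (idx ! a, l) * A (idx[a := l]) $$ (r,c))
      else 0\<^sub>m 0 0)"

definition transf :: "nat list \<Rightarrow> complex mat list \<Rightarrow> tensor \<Rightarrow> tensor" where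
  "transf ns Us A = foldl (\<lambda>T a. mode_prod ns a (Us ! a) T) A [0..<length ns]"

definition transf_inv :: "nat list \<Rightarrow> complex mat list \<Rightarrow> tensor \<Rightarrow> tensor" where
  "transf_inv ns Us A = foldl (\<lambda>T a. mode_prod ns a (inv_mat (Us ! a)) T) A (rev [0..<length ns])"

definition tprod :: "nat list \<Rightarrow> complex mat list \<Rightarrow> tensor \<Rightarrow> tensor \<Rightarrow> tensor" where
  "tprod ns Us A B = transf_inv ns Us
     (\<lambda>idx. if valid_idx ns idx then transf ns Us A idx * transf ns Us B idx else 0\<^sub>m 0 0)"

definition ttrans :: "nat list \<Rightarrow> complex mat list \<Rightarrow> tensor \<Rightarrow> tensor" where
  "ttrans ns Us A = transf_inv ns Us
     (\<lambda>idx. if valid_idx ns idx then ctrans (transf ns Us A idx) else 0\<^sub>m 0 0)"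

definition tident :: "nat list \<Rightarrow> complex mat list \<Rightarrow> nat \<Rightarrow> tensor" where
  "tident ns Us m = transf_inv ns Us (\<lambda>idx. if valid_idx ns idx then 1\<^sub>m m else 0\<^sub>m 0 0)"

definition part_orth :: "nat list \<Rightarrow> complex mat list \<Rightarrow> nat \<Rightarrow> tensor \<Rightarrow> bool" where
  "part_orth ns Us k Q \<longleftrightarrow> tprod ns Us (ttrans ns Us Q) Q = tident ns Us k"

definition torth :: "nat list \<Rightarrow> complex mat list \<Rightarrow> nat \<Rightarrow> tensor \<Rightarrow> bool" where
  "torth ns Us m Q \<longleftrightarrow> tprod ns Us (ttrans ns Us Q) Q = tident ns Us m \<and>
                      tprod ns Us Q (ttrans ns Us Q) = tident ns Us m"

definition f_diagonal :: "nat list \<Rightarrow> tensor \<Rightarrow> bool" where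
  "f_diagonal ns S \<longleftrightarrow> (\<forall>idx. valid_idx ns idx \<longrightarrow> diagonal_mat (S idx))"

definition is_tsvd :: "nat list \<Rightarrow> complex mat list \<Rightarrow> nat \<Rightarrow> nat \<Rightarrow> tensor \<Rightarrow>
    tensor \<Rightarrow> tensor \<Rightarrow> tensor \<Rightarrow> bool" where
  "is_tsvd ns Us m1 m2 A U S V \<longleftrightarrow>
     is_tensor m1 m1 ns U \<and> is_tensor m1 m2 ns S \<and> is_tensor m2 m2 ns V \<and>
     torth ns Us m1 U \<and> torth ns Us m2 V \<and> f_diagonal ns S \<and>
     A = tprod ns Us (tprod ns Us U S) (ttrans ns Us V) \<and>
     (\<forall>idx. valid_idx ns idx \<longrightarrow>
        unitary_mat m1 (transf ns Us U idx) \<and> unitary_mat m2 (transf ns Us V idx) \<and>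
        diagonal_mat (transf ns Us S idx) \<and>
        transf ns Us A idx = transf ns Us U idx * transf ns Us S idx * ctrans (transf ns Us V idx) \<and>
        (\<forall>i<min m1 m2. transf ns Us S idx $$ (i,i) \<in> \<real> \<and> 0 \<le> Re (transf ns Us S idx $$ (i,i))) \<and>
        (\<forall>i i'. i \<le> i' \<and> i' < min m1 m2 \<longrightarrow>
           Re (transf ns Us S idx $$ (i',i')) \<le> Re (transf ns Us S idx $$ (i,i))))"

definition gst_delta :: "real \<Rightarrow> real \<Rightarrow> real" where
  "gst_delta w p = (2*w*(1-p)) powr (1/(2-p)) + w*p*(2*w*(1-p)) powr ((p-1)/(2-p))"

definition GST :: "real \<Rightarrow> real \<Rightarrow> real \<Rightarrow> real" where
  "GST s w p = (if w = 0 then s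
     else if \<bar>s\<bar> \<le> gst_delta w p then 0
     else sgn s * (GREATEST a. a > 0 \<and> a + w*p*a powr (p-1) = \<bar>s\<bar>))"

(* X is a value of D_{W,p,tau}(A) computed from some T-SVD of the m1 x m2 x ... tensor A;
   w i j is the weight w_{i+1,j+1} of the paper (0-based indices). *)
definition is_gtsvt :: "nat list \<Rightarrow> complex mat list \<Rightarrow> (nat \<Rightarrow> nat \<Rightarrow> real) \<Rightarrow> real \<Rightarrow> real \<Rightarrow>
    nat \<Rightarrow> nat \<Rightarrow> tensor \<Rightarrow> tensor \<Rightarrow> bool" where
  "is_gtsvt ns Us w p \<tau> m1 m2 A X \<longleftrightarrow>
     (\<exists>U S V. is_tsvd ns Us m1 m2 A U S V \<and>
        X = tprod ns Us (tprod ns Us U (transf_inv ns Us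
              (\<lambda>idx. if valid_idx ns idx then
                 mat m1 m2 (\<lambda>(r,c). if r = c then
                   complex_of_real (GST (Re (transf ns Us S idx $$ (r,r))) (\<tau> * w r (lin_idx ns idx)) p)
                   else 0)
               else 0\<^sub>m 0 0))) (ttrans ns Us V))"

end

theory Submission
  imports Defs "Jordan_Normal_Form.Determinant"
begin



lemma ctrans_dims[simp]: "dim_row (ctrans A) = dim_col A" "dim_col (ctrans A) = dim_row A"
  unfolding ctrans_def by simp_all

lemma ctrans_index[simp]: "i < dim_col A \<Longrightarrow> j < dim_row A \<Longrightarrow> ctrans A $$ (i,j) = cnj (A $$ (j,i))"
  unfolding ctrans_def by simp

lemma ctrans_carrier[simp]: "A \<in> carrier_mat n m \<Longrightarrow> ctrans A \<in> carrier_mat m n"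
  unfolding ctrans_def carrier_mat_def by simp

lemma mult_entry: "A \<in> carrier_mat n m \<Longrightarrow> B \<in> carrier_mat m p \<Longrightarrow> i < n \<Longrightarrow> j < p \<Longrightarrow>
  (A * B) $$ (i,j) = (\<Sum>l<m. A $$ (i,l) * B $$ (l,j))"
  by (simp add: scalar_prod_def atLeast0LessThan)

lemma ctrans_mult_entry: "A \<in> carrier_mat n m \<Longrightarrow> B \<in> carrier_mat n p \<Longrightarrow> i < m \<Longrightarrow> j < p \<Longrightarrow>
  (ctrans A * B) $$ (i,j) = (\<Sum>l<n. cnj (A $$ (l,i)) * B $$ (l,j))"
  by (subst mult_entry[of _ m n _ p], auto)

lemma mult_ctrans_entry: "A \<in> carrier_mat n m \<Longrightarrow> B \<in> carrier_mat p m \<Longrightarrow> i < n \<Longrightarrow> j < p \<Longrightarrow>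
  (A * ctrans B) $$ (i,j) = (\<Sum>l<m. A $$ (i,l) * cnj (B $$ (j,l)))"
  by (subst mult_entry[of _ n m _ p], auto)

lemma sum_if_less: fixes n m :: nat assumes "n \<le> m" shows "(\<Sum>l<m. if l < n then g l else 0) = (\<Sum>l<n. (g l :: 'a::comm_monoid_add))"
proof (rule sum.mono_neutral_cong_right)
  show "{..<n} \<subseteq> {..<m}" using assms by auto
qed auto

lemma orth_le: assumes C: "C \<in> carrier_mat n m" and O: "ctrans C * C = 1\<^sub>m m" shows "m \<le> n"
proof (rule ccontr)
  assume "\<not> m \<le> n" hence nm: "n < m" by simp
  define C' where "C' = mat m m (\<lambda>(i,j). if i < n then C $$ (i,j) else 0)"
  have C'c: "C' \<in> carrier_mat m m" unfolding C'_def by simp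
  have "ctrans C' * C' = 1\<^sub>m m"
  proof (rule eq_matI)
    fix i j assume "i < dim_row (1\<^sub>m m)" "j < dim_col (1\<^sub>m m)"
    then have ij: "i < m" "j < m" by auto
    have "(ctrans C' * C') $$ (i,j) = (\<Sum>l<m. cnj (C' $$ (l,i)) * C' $$ (l,j))"
      by (rule ctrans_mult_entry[OF C'c C'c ij])
    also have "\<dots> = (\<Sum>l<m. if l < n then cnj (C $$ (l,i)) * C $$ (l,j) else 0)"
      unfolding C'_def using ij by (intro sum.cong, auto)
    also have "\<dots> = (\<Sum>l<n. cnj (C $$ (l,i)) * C $$ (l,j))" using nm by (intro sum_if_less, simp)
    also have "\<dots> = (ctrans C * C) $$ (i,j)" by (rule ctrans_mult_entry[OF C C ij, symmetric])
    finally show "(ctrans C' * C') $$ (i,j) = 1\<^sub>m m $$ (i,j)" using O by simp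
  qed (use C'c in auto)
  then have "C' * ctrans C' = 1\<^sub>m m" by (rule mat_mult_left_right_inverse[OF ctrans_carrier[OF C'c] C'c])
  then have "(C' * ctrans C') $$ (n,n) = 1" using nm by simp
  moreover have "(C' * ctrans C') $$ (n,n) = (\<Sum>l<m. C' $$ (n,l) * cnj (C' $$ (n,l)))"
    by (rule mult_ctrans_entry[OF C'c C'c nm nm])
  moreover have "\<dots> = 0" unfolding C'_def using nm by (intro sum.neutral, auto)
  ultimately show False by simp
qed

lemma orth_entries: assumes C: "C \<in> carrier_mat n m" and O: "ctrans C * C = 1\<^sub>m m"
  and "r < m" "t < m"
  shows "(\<Sum>l<n. cnj (C $$ (l,r)) * C $$ (l,t)) = (if r = t then 1 else 0)"
  using ctrans_mult_entry[OF C C assms(3,4)] O assms(3,4) by simp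

lemma ext1: assumes C: "C \<in> carrier_mat n m" and O: "ctrans C * C = 1\<^sub>m m" and mn: "m < n"
  shows "\<exists>x::nat \<Rightarrow> complex. (\<Sum>i<n. cnj (x i) * x i) = 1 \<and> (\<forall>r<m. (\<Sum>i<n. cnj (C $$ (i,r)) * x i) = 0)"
proof -
  define P where "P i j = (if i = j then 1 else 0) - (\<Sum>r<m. C $$ (i,r) * cnj (C $$ (j,r)))" for i j
  have "(\<Sum>i<n. P i i) = (\<Sum>i<n. 1) - (\<Sum>i<n. \<Sum>r<m. C $$ (i,r) * cnj (C $$ (i,r)))"
    unfolding P_def by (simp add: sum_subtractf)
  also have "(\<Sum>i<n. \<Sum>r<m. C $$ (i,r) * cnj (C $$ (i,r))) = (\<Sum>r<m. \<Sum>i<n. cnj (C $$ (i,r)) * C $$ (i,r))"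
    by (subst sum.swap, simp add: mult.commute)
  also have "\<dots> = (\<Sum>r<m. 1)" using orth_entries[OF C O] by simp
  finally have tr: "(\<Sum>i<n. P i i) = of_nat n - of_nat m" by simp
  have "(of_nat n - of_nat m :: complex) \<noteq> 0" using mn by simp
  then obtain j0 where j0: "j0 < n" "P j0 j0 \<noteq> 0" unfolding tr[symmetric]
    by (metis (no_types, lifting) lessThan_iff sum.neutral)
  define y where "y i = P i j0" for i
  have orth: "(\<Sum>i<n. cnj (C $$ (i,r)) * y i) = 0" if r: "r < m" for r
  proof -
    have "(\<Sum>i<n. cnj (C $$ (i,r)) * y i) = (\<Sum>i<n. cnj (C $$ (i,r)) * (if i = j0 then 1 else 0))
         - (\<Sum>i<n. \<Sum>s<m. cnj (C $$ (i,r)) * C $$ (i,s) * cnj (C $$ (j0,s)))"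
      unfolding y_def P_def by (simp add: sum_subtractf right_diff_distrib sum_distrib_left mult.assoc)
    also have "(\<Sum>i<n. cnj (C $$ (i,r)) * (if i = j0 then 1 else 0)) = cnj (C $$ (j0,r))"
      using j0 by (simp add: if_distrib sum.delta' cong: if_cong)
    also have "(\<Sum>i<n. \<Sum>s<m. cnj (C $$ (i,r)) * C $$ (i,s) * cnj (C $$ (j0,s)))
        = (\<Sum>s<m. (\<Sum>i<n. cnj (C $$ (i,r)) * C $$ (i,s)) * cnj (C $$ (j0,s)))"
      by (subst sum.swap, simp add: sum_distrib_right)
    also have "\<dots> = (\<Sum>s<m. (if r = s then cnj (C $$ (j0,s)) else 0))"
      using orth_entries[OF C O r] by (intro sum.cong, auto)
    also have "\<dots> = cnj (C $$ (j0,r))" using r by (simp add: sum.delta)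
    finally show ?thesis by simp
  qed
  define N where "N = (\<Sum>i<n. (Re (y i))\<^sup>2 + (Im (y i))\<^sup>2)"
  have Npos: "N > 0" unfolding N_def
  proof (rule sum_pos2[of _ j0])
    show "0 < (Re (y j0))\<^sup>2 + (Im (y j0))\<^sup>2" using j0 unfolding y_def
      using complex_neq_0 by blast
  qed (use j0 in auto)
  have yy: "(\<Sum>i<n. cnj (y i) * y i) = complex_of_real N"
    unfolding N_def of_real_sum by (intro sum.cong, simp, subst mult.commute, rule complex_mult_cnj)
  define x where "x i = y i / complex_of_real (sqrt N)" for i
  have sN: "complex_of_real (sqrt N) \<noteq> 0" using Npos by simp
  have "(\<Sum>i<n. cnj (x i) * x i) = (\<Sum>i<n. cnj (y i) * y i) / (complex_of_real (sqrt N) * complex_of_real (sqrt N))"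
    unfolding x_def by (simp add: sum_divide_distrib)
  also have "\<dots> = 1" unfolding yy of_real_mult[symmetric] using Npos by simp
  finally have 1: "(\<Sum>i<n. cnj (x i) * x i) = 1" .
  have 2: "\<forall>r<m. (\<Sum>i<n. cnj (C $$ (i,r)) * x i) = 0"
  proof (intro allI impI)
    fix r assume r: "r < m"
    have "(\<Sum>i<n. cnj (C $$ (i,r)) * x i) = (\<Sum>i<n. cnj (C $$ (i,r)) * y i) / complex_of_real (sqrt N)"
      unfolding x_def by (simp add: sum_divide_distrib)
    then show "(\<Sum>i<n. cnj (C $$ (i,r)) * x i) = 0" using orth[OF r] by simp
  qed
  show ?thesis using 1 2 by blast
qed


lemma completion_aux: "n - m = d \<Longrightarrow> m \<le> n \<Longrightarrow> C \<in> carrier_mat n m \<Longrightarrow> ctrans C * C = 1\<^sub>m m \<Longrightarrow>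
   \<exists>U. U \<in> carrier_mat n n \<and> ctrans U * U = 1\<^sub>m n \<and> (\<forall>i<n. \<forall>j<m. U $$ (i,j) = C $$ (i,j))"
proof (induction d arbitrary: m C)
  case 0
  then have "m = n" by simp
  then show ?case using 0 by blast
next
  case (Suc d)
  then have mn: "m < n" by simp
  obtain x where x1: "(\<Sum>i<n. cnj (x i) * x i) = 1" and x2: "\<forall>r<m. (\<Sum>i<n. cnj (C $$ (i,r)) * x i) = 0"
    using ext1[OF Suc.prems(3,4) mn] by blast
  define C2 where "C2 = mat n (Suc m) (\<lambda>(i,j). if j < m then C $$ (i,j) else x i)"
  have C2c: "C2 \<in> carrier_mat n (Suc m)" unfolding C2_def by simp
  have O2: "ctrans C2 * C2 = 1\<^sub>m (Suc m)"
  proof (rule eq_matI)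
    fix a b assume "a < dim_row (1\<^sub>m (Suc m))" "b < dim_col (1\<^sub>m (Suc m))"
    then have ab: "a < Suc m" "b < Suc m" by auto
    have e: "(ctrans C2 * C2) $$ (a,b) = (\<Sum>l<n. cnj (C2 $$ (l,a)) * C2 $$ (l,b))"
      by (rule ctrans_mult_entry[OF C2c C2c ab])
    show "(ctrans C2 * C2) $$ (a,b) = 1\<^sub>m (Suc m) $$ (a,b)"
    proof (cases "a < m")
      case a: True
      show ?thesis
      proof (cases "b < m")
        case True
        then have "(ctrans C2 * C2) $$ (a,b) = (\<Sum>l<n. cnj (C $$ (l,a)) * C $$ (l,b))"
          unfolding e unfolding C2_def using a by (intro sum.cong, auto)
        then show ?thesis using orth_entries[OF Suc.prems(3,4) a True] a True by simp
      next
        case False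
        then have "(ctrans C2 * C2) $$ (a,b) = (\<Sum>l<n. cnj (C $$ (l,a)) * x l)"
          unfolding e unfolding C2_def using a ab by (intro sum.cong, auto)
        then show ?thesis using x2 a False ab by simp
      qed
    next
      case a: False
      show ?thesis
      proof (cases "b < m")
        case True
        then have "(ctrans C2 * C2) $$ (a,b) = (\<Sum>l<n. cnj (x l) * C $$ (l,b))"
          unfolding e unfolding C2_def using a ab by (intro sum.cong, auto)
        also have "\<dots> = cnj (\<Sum>l<n. cnj (C $$ (l,b)) * x l)" by (simp add: cnj_sum mult.commute)
        finally show ?thesis using x2 a True ab by simp
      next
        case False
        then have "(ctrans C2 * C2) $$ (a,b) = (\<Sum>l<n. cnj (x l) * x l)"
          unfolding e unfolding C2_def using a ab by (intro sum.cong, auto)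
        then show ?thesis using x1 a False ab by simp
      qed
    qed
  qed (use C2c in auto)
  have "n - Suc m = d" using Suc.prems by simp
  from Suc.IH[OF this _ C2c O2] mn obtain U where U: "U \<in> carrier_mat n n" "ctrans U * U = 1\<^sub>m n"
    "\<forall>i<n. \<forall>j<Suc m. U $$ (i,j) = C2 $$ (i,j)" by auto
  have "\<forall>i<n. \<forall>j<m. U $$ (i,j) = C $$ (i,j)" using U(3) unfolding C2_def by auto
  then show ?case using U by blast
qed

lemma completion: assumes C: "C \<in> carrier_mat n m" and O: "ctrans C * C = 1\<^sub>m m"
  shows "m \<le> n \<and> (\<exists>U. unitary_mat n U \<and> (\<forall>i<n. \<forall>j<m. U $$ (i,j) = C $$ (i,j)))"
proof -
  have mn: "m \<le> n" by (rule orth_le[OF C O])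
  obtain U where U: "U \<in> carrier_mat n n" "ctrans U * U = 1\<^sub>m n" "\<forall>i<n. \<forall>j<m. U $$ (i,j) = C $$ (i,j)"
    using completion_aux[OF refl mn C O] by blast
  have "U * ctrans U = 1\<^sub>m n" by (rule mat_mult_left_right_inverse[OF ctrans_carrier[OF U(1)] U(1) U(2)])
  then show ?thesis using U mn unfolding unitary_mat_def by blast
qed



lemma valid_upd: "valid_idx ns idx \<Longrightarrow> a < length ns \<Longrightarrow> l < ns!a \<Longrightarrow> valid_idx ns (idx[a:=l])"
  by (auto simp: valid_idx_def nth_list_update)

lemma valid_nth: "valid_idx ns idx \<Longrightarrow> a < length ns \<Longrightarrow> idx!a < ns!a"
  by (auto simp: valid_idx_def)

lemma is_tensor_valid: "is_tensor m1 m2 ns A \<Longrightarrow> valid_idx ns idx \<Longrightarrow> A idx \<in> carrier_mat m1 m2"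
  unfolding is_tensor_def by metis

lemma is_tensor_invalid: "is_tensor m1 m2 ns A \<Longrightarrow> \<not> valid_idx ns idx \<Longrightarrow> A idx = 0\<^sub>m 0 0"
  unfolding is_tensor_def by metis

lemma tz_tensor: "(\<And>idx. valid_idx ns idx \<Longrightarrow> F idx \<in> carrier_mat m1 m2) \<Longrightarrow>
   is_tensor m1 m2 ns (\<lambda>idx. if valid_idx ns idx then F idx else 0\<^sub>m 0 0)"
  unfolding is_tensor_def by auto

lemma mode_prod_tensor: "is_tensor m1 m2 ns A \<Longrightarrow> is_tensor m1 m2 ns (mode_prod ns a M A)"
  unfolding mode_prod_def by (rule tz_tensor, auto dest: is_tensor_valid)

lemma mode_prod_entry: "is_tensor m1 m2 ns A \<Longrightarrow> valid_idx ns idx \<Longrightarrow> r < m1 \<Longrightarrow> c < m2 \<Longrightarrow>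
  mode_prod ns a M A idx $$ (r,c) = (\<Sum>l<ns!a. M $$ (idx!a,l) * A (idx[a:=l]) $$ (r,c))"
  unfolding mode_prod_def by (auto dest: is_tensor_valid)

lemma mode_prod_valid_carrier: "is_tensor m1 m2 ns A \<Longrightarrow> valid_idx ns idx \<Longrightarrow>
  mode_prod ns a M A idx \<in> carrier_mat m1 m2"
  using mode_prod_tensor is_tensor_valid by metis

lemma mode_prod_one: assumes A: "is_tensor m1 m2 ns A" and a: "a < length ns"
  shows "mode_prod ns a (1\<^sub>m (ns!a)) A = A"
proof (rule ext)
  fix idx
  show "mode_prod ns a (1\<^sub>m (ns!a)) A idx = A idx"
  proof (cases "valid_idx ns idx")
    case True
    have ia: "idx!a < ns!a" using valid_nth[OF True a] .
    show ?thesis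
    proof (rule eq_matI)
      show "dim_row (mode_prod ns a (1\<^sub>m (ns ! a)) A idx) = dim_row (A idx)"
        "dim_col (mode_prod ns a (1\<^sub>m (ns ! a)) A idx) = dim_col (A idx)"
        using mode_prod_valid_carrier[OF A True] is_tensor_valid[OF A True] by auto
      fix r c assume "r < dim_row (A idx)" "c < dim_col (A idx)"
      then have rc: "r < m1" "c < m2" using is_tensor_valid[OF A True] by auto
      have "mode_prod ns a (1\<^sub>m (ns!a)) A idx $$ (r,c)
         = (\<Sum>l<ns!a. (if idx!a = l then A (idx[a:=l]) $$ (r,c) else 0))"
        unfolding mode_prod_entry[OF A True rc]
        by (rule sum.cong, auto simp: ia)
      also have "\<dots> = A (idx[a:=idx!a]) $$ (r,c)" using ia by (simp add: sum.delta)
      also have "\<dots> = A idx $$ (r,c)" by simp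
      finally show "mode_prod ns a (1\<^sub>m (ns!a)) A idx $$ (r,c) = A idx $$ (r,c)" .
    qed
  next
    case False
    then show ?thesis using A by (simp add: mode_prod_def is_tensor_invalid)
  qed
qed

lemma mode_prod_mult: assumes A: "is_tensor m1 m2 ns A" and a: "a < length ns"
  and M: "M \<in> carrier_mat (ns!a) (ns!a)" and N: "N \<in> carrier_mat (ns!a) (ns!a)"
  shows "mode_prod ns a M (mode_prod ns a N A) = mode_prod ns a (M*N) A"
proof (rule ext)
  fix idx
  have A2: "is_tensor m1 m2 ns (mode_prod ns a N A)" by (rule mode_prod_tensor[OF A])
  show "mode_prod ns a M (mode_prod ns a N A) idx = mode_prod ns a (M*N) A idx"
  proof (cases "valid_idx ns idx")
    case True
    have ia: "idx!a < ns!a" using valid_nth[OF True a] .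
    show ?thesis
    proof (rule eq_matI)
      show "dim_row (mode_prod ns a M (mode_prod ns a N A) idx) = dim_row (mode_prod ns a (M*N) A idx)"
        "dim_col (mode_prod ns a M (mode_prod ns a N A) idx) = dim_col (mode_prod ns a (M*N) A idx)"
        using mode_prod_valid_carrier[OF A2 True, of a M] mode_prod_valid_carrier[OF A True, of a "M*N"] by auto
      fix r c assume "r < dim_row (mode_prod ns a (M*N) A idx)" "c < dim_col (mode_prod ns a (M*N) A idx)"
      then have rc: "r < m1" "c < m2" using mode_prod_valid_carrier[OF A True, of a "M*N"] by auto
      have "mode_prod ns a M (mode_prod ns a N A) idx $$ (r,c)
         = (\<Sum>l<ns!a. M $$ (idx!a,l) * (\<Sum>m<ns!a. N $$ (l,m) * A (idx[a:=m]) $$ (r,c)))"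
        unfolding mode_prod_entry[OF A2 True rc]
        using True a by (intro sum.cong, simp, subst mode_prod_entry[OF A valid_upd[OF True a] rc], auto simp: valid_idx_def)
      also have "\<dots> = (\<Sum>l<ns!a. \<Sum>m<ns!a. M $$ (idx!a,l) * N $$ (l,m) * A (idx[a:=m]) $$ (r,c))"
        by (simp add: sum_distrib_left mult.assoc)
      also have "\<dots> = (\<Sum>m<ns!a. \<Sum>l<ns!a. M $$ (idx!a,l) * N $$ (l,m) * A (idx[a:=m]) $$ (r,c))"
        by (rule sum.swap)
      also have "\<dots> = (\<Sum>m<ns!a. (M*N) $$ (idx!a,m) * A (idx[a:=m]) $$ (r,c))"
      proof (rule sum.cong, simp)
        fix m assume "m \<in> {..<ns!a}"
        then have "(M*N) $$ (idx!a,m) = (\<Sum>l<ns!a. M $$ (idx!a,l) * N $$ (l,m))"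
          using M N ia by (simp add: scalar_prod_def atLeast0LessThan)
        then show "(\<Sum>l<ns!a. M $$ (idx!a,l) * N $$ (l,m) * A (idx[a:=m]) $$ (r,c))
             = (M*N) $$ (idx!a,m) * A (idx[a:=m]) $$ (r,c)"
          by (simp add: sum_distrib_right)
      qed
      also have "\<dots> = mode_prod ns a (M*N) A idx $$ (r,c)"
        unfolding mode_prod_entry[OF A True rc] ..
      finally show "mode_prod ns a M (mode_prod ns a N A) idx $$ (r,c) = mode_prod ns a (M*N) A idx $$ (r,c)" .
    qed
  next
    case False
    then show ?thesis by (simp add: mode_prod_def)
  qed
qed

definition GU :: "nat list \<Rightarrow> complex mat list \<Rightarrow> bool" where
  "GU ns Us \<longleftrightarrow> (\<forall>a<length ns. Us!a \<in> carrier_mat (ns!a) (ns!a) \<and>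
     inv_mat (Us!a) \<in> carrier_mat (ns!a) (ns!a) \<and> Us!a * inv_mat (Us!a) = 1\<^sub>m (ns!a) \<and>
     inv_mat (Us!a) * Us!a = 1\<^sub>m (ns!a))"

lemma smult_smult_one: "(c::complex) \<noteq> 0 \<Longrightarrow> (1/c) \<cdot>\<^sub>m (c \<cdot>\<^sub>m 1\<^sub>m n) = 1\<^sub>m n"
  by (rule eq_matI, auto)

lemma inv_mat_prop: assumes U: "U \<in> carrier_mat n n" and al: "\<alpha> \<noteq> 0"
  and L: "U * ctrans U = \<alpha> \<cdot>\<^sub>m 1\<^sub>m n" and R: "ctrans U * U = \<alpha> \<cdot>\<^sub>m 1\<^sub>m n"
  shows "inv_mat U \<in> carrier_mat n n \<and> U * inv_mat U = 1\<^sub>m n \<and> inv_mat U * U = 1\<^sub>m n"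
proof -
  define M0 where "M0 = (1/\<alpha>) \<cdot>\<^sub>m ctrans U"
  have CU: "ctrans U \<in> carrier_mat n n" using U by simp
  have M0: "M0 \<in> carrier_mat n n" using CU by (simp add: M0_def)
  have "U * M0 = (1/\<alpha>) \<cdot>\<^sub>m (U * ctrans U)" unfolding M0_def
    by (rule mult_smult_distrib[OF U CU])
  also have "\<dots> = 1\<^sub>m n" unfolding L using al by (rule smult_smult_one)
  finally have 1: "U * M0 = 1\<^sub>m n" .
  have "M0 * U = (1/\<alpha>) \<cdot>\<^sub>m (ctrans U * U)" unfolding M0_def
    by (rule mult_smult_assoc_mat[OF CU U])
  also have "\<dots> = 1\<^sub>m n" unfolding R using al by (rule smult_smult_one)
  finally have 2: "M0 * U = 1\<^sub>m n" .
  have dr: "dim_row U = n" using U by simp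
  have "inv_mat U = M0" unfolding inv_mat_def dr
  proof (rule the_equality)
    show "M0 \<in> carrier_mat n n \<and> U * M0 = 1\<^sub>m n \<and> M0 * U = 1\<^sub>m n" using M0 1 2 by blast
    fix M assume M: "M \<in> carrier_mat n n \<and> U * M = 1\<^sub>m n \<and> M * U = 1\<^sub>m n"
    have Mc: "M \<in> carrier_mat n n" using M by blast
    have "M = 1\<^sub>m n * M" using Mc by (simp add: left_mult_one_mat)
    also have "\<dots> = (M0 * U) * M" using 2 by simp
    also have "\<dots> = M0 * (U * M)" by (rule assoc_mult_mat[OF M0 U Mc])
    also have "\<dots> = M0 * 1\<^sub>m n" using M by simp
    also have "\<dots> = M0" using M0 by (simp add: right_mult_one_mat)
    finally show "M = M0" .
  qed
  then show ?thesis using M0 1 2 by simp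
qed


lemma GU_from: assumes "\<forall>a<length ns. Us ! a \<in> carrier_mat (ns ! a) (ns ! a) \<and>
               (\<exists>\<alpha>>0. Us ! a * ctrans (Us ! a) = \<alpha> \<cdot>\<^sub>m 1\<^sub>m (ns ! a) \<and>
                       ctrans (Us ! a) * Us ! a = \<alpha> \<cdot>\<^sub>m 1\<^sub>m (ns ! a))"
  shows "GU ns Us"
  unfolding GU_def
proof (intro allI impI)
  fix a assume a: "a < length ns"
  then obtain \<alpha> :: complex where U: "Us ! a \<in> carrier_mat (ns ! a) (ns ! a)" and al: "\<alpha> > 0"
    and L: "Us ! a * ctrans (Us ! a) = \<alpha> \<cdot>\<^sub>m 1\<^sub>m (ns ! a)"
    and R: "ctrans (Us ! a) * Us ! a = \<alpha> \<cdot>\<^sub>m 1\<^sub>m (ns ! a)" using assms by blast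
  have "\<alpha> \<noteq> 0" using al by auto
  from inv_mat_prop[OF U this L R] U
  show "Us ! a \<in> carrier_mat (ns ! a) (ns ! a) \<and>
     inv_mat (Us!a) \<in> carrier_mat (ns!a) (ns!a) \<and> Us!a * inv_mat (Us!a) = 1\<^sub>m (ns!a) \<and>
     inv_mat (Us!a) * Us!a = 1\<^sub>m (ns!a)" by blast
qed

lemma foldl_mode_tensor: "is_tensor m1 m2 ns A \<Longrightarrow>
   is_tensor m1 m2 ns (foldl (\<lambda>T a. mode_prod ns a (h a) T) A xs)"
  by (induction xs arbitrary: A) (auto intro: mode_prod_tensor)

lemma transf_tensor: "is_tensor m1 m2 ns A \<Longrightarrow> is_tensor m1 m2 ns (transf ns Us A)"
  unfolding transf_def by (rule foldl_mode_tensor)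

lemma transf_inv_tensor: "is_tensor m1 m2 ns A \<Longrightarrow> is_tensor m1 m2 ns (transf_inv ns Us A)"
  unfolding transf_inv_def by (rule foldl_mode_tensor)

lemma cancel1: assumes G: "GU ns Us" and A: "is_tensor m1 m2 ns A"
  shows "set xs \<subseteq> {..<length ns} \<Longrightarrow>
    foldl (\<lambda>T a. mode_prod ns a (inv_mat (Us ! a)) T) (foldl (\<lambda>T a. mode_prod ns a (Us ! a) T) A xs) (rev xs) = A"
proof (induction xs rule: rev_induct)
  case Nil
  then show ?case by simp
next
  case (snoc x xs)
  define Y where "Y = foldl (\<lambda>T a. mode_prod ns a (Us ! a) T) A xs"
  have Yt: "is_tensor m1 m2 ns Y" unfolding Y_def by (rule foldl_mode_tensor[OF A])
  have x: "x < length ns" using snoc.prems by auto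
  have "mode_prod ns x (inv_mat (Us!x)) (mode_prod ns x (Us!x) Y) = Y"
    using G x by (simp add: GU_def mode_prod_mult[OF Yt x] mode_prod_one[OF Yt x])
  then show ?case using snoc by (simp add: Y_def[symmetric])
qed

lemma cancel2: assumes G: "GU ns Us" and A: "is_tensor m1 m2 ns A"
  shows "set xs \<subseteq> {..<length ns} \<Longrightarrow>
    foldl (\<lambda>T a. mode_prod ns a (Us ! a) T) (foldl (\<lambda>T a. mode_prod ns a (inv_mat (Us ! a)) T) A (rev xs)) xs = A"
proof (induction xs)
  case Nil
  then show ?case by simp
next
  case (Cons x xs)
  define Y where "Y = foldl (\<lambda>T a. mode_prod ns a (inv_mat (Us ! a)) T) A (rev xs)"
  have Yt: "is_tensor m1 m2 ns Y" unfolding Y_def by (rule foldl_mode_tensor[OF A])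
  have x: "x < length ns" using Cons.prems by auto
  have "mode_prod ns x (Us!x) (mode_prod ns x (inv_mat (Us!x)) Y) = Y"
    using G x by (simp add: GU_def mode_prod_mult[OF Yt x] mode_prod_one[OF Yt x])
  then show ?case using Cons by (simp add: Y_def[symmetric])
qed

lemma transf_inv_transf: "GU ns Us \<Longrightarrow> is_tensor m1 m2 ns A \<Longrightarrow> transf_inv ns Us (transf ns Us A) = A"
  unfolding transf_def transf_inv_def by (rule cancel1, auto)

lemma transf_transf_inv: "GU ns Us \<Longrightarrow> is_tensor m1 m2 ns A \<Longrightarrow> transf ns Us (transf_inv ns Us A) = A"
  unfolding transf_def transf_inv_def by (rule cancel2, auto)



definition Gm :: "nat \<Rightarrow> nat \<Rightarrow> (nat \<Rightarrow> real \<Rightarrow> real) \<Rightarrow> complex mat \<Rightarrow> complex mat" where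
  "Gm m1 m2 f s = mat m1 m2 (\<lambda>(r,c). if r = c then complex_of_real (f r (Re (s $$ (r,r)))) else 0)"

definition svd :: "nat \<Rightarrow> nat \<Rightarrow> complex mat \<Rightarrow> complex mat \<Rightarrow> complex mat \<Rightarrow> complex mat \<Rightarrow> bool" where
  "svd m1 m2 A u s v \<longleftrightarrow> unitary_mat m1 u \<and> unitary_mat m2 v \<and> s \<in> carrier_mat m1 m2 \<and>
     diagonal_mat s \<and> A = u * s * ctrans v \<and>
     (\<forall>i<min m1 m2. s $$ (i,i) \<in> \<real> \<and> 0 \<le> Re (s $$ (i,i))) \<and>
     (\<forall>i i'. i \<le> i' \<and> i' < min m1 m2 \<longrightarrow> Re (s $$ (i',i')) \<le> Re (s $$ (i,i)))"

lemma Gm_carrier[simp]: "Gm m1 m2 f s \<in> carrier_mat m1 m2" unfolding Gm_def by simp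

lemma Gm_dims[simp]: "dim_row (Gm m1 m2 f s) = m1" "dim_col (Gm m1 m2 f s) = m2" unfolding Gm_def by simp_all

lemma ctrans_mult: assumes A: "A \<in> carrier_mat n m" and B: "B \<in> carrier_mat m p"
  shows "ctrans (A * B) = ctrans B * ctrans A"
proof (rule eq_matI)
  fix i j assume "i < dim_row (ctrans B * ctrans A)" "j < dim_col (ctrans B * ctrans A)"
  then have ij: "i < p" "j < n" using A B by auto
  have "ctrans (A * B) $$ (i,j) = cnj ((A*B) $$ (j,i))" using A B ij by simp
  also have "\<dots> = cnj (\<Sum>l<m. A $$ (j,l) * B $$ (l,i))" by (simp add: mult_entry[OF A B ij(2,1)])
  also have "\<dots> = (\<Sum>l<m. ctrans B $$ (i,l) * ctrans A $$ (l,j))"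
    unfolding cnj_sum using A B ij by (intro sum.cong, auto simp: mult.commute)
  also have "\<dots> = (ctrans B * ctrans A) $$ (i,j)"
    by (rule mult_entry[OF ctrans_carrier[OF B] ctrans_carrier[OF A] ij, symmetric])
  finally show "ctrans (A * B) $$ (i,j) = (ctrans B * ctrans A) $$ (i,j)" .
qed (use A B in auto)

lemma diag_mult: assumes X: "X \<in> carrier_mat c a" and M: "M \<in> carrier_mat a b" and rk: "rk \<le> a"
  and Me: "\<forall>l<a. \<forall>j<b. M $$ (l,j) = (if l = j \<and> j < rk then d j else 0)"
  and ij: "i < c" "j < b"
  shows "(X * M) $$ (i,j) = (if j < rk then X $$ (i,j) * d j else 0)"
proof -
  have "(X * M) $$ (i,j) = (\<Sum>l<a. X $$ (i,l) * M $$ (l,j))" by (rule mult_entry[OF X M ij])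
  also have "\<dots> = (\<Sum>l<a. if l = j then (if j < rk then X $$ (i,j) * d j else 0) else 0)"
    using Me ij by (intro sum.cong, auto)
  also have "\<dots> = (if j < rk then X $$ (i,j) * d j else 0)" using rk by (auto simp: sum.delta)
  finally show ?thesis .
qed

lemma pad_mult: assumes u: "u \<in> carrier_mat n1 n1" and C: "C \<in> carrier_mat n1 k" and kn: "k \<le> n1"
  and uC: "\<forall>i<n1. \<forall>j<k. u $$ (i,j) = C $$ (i,j)"
  and M: "M \<in> carrier_mat n1 n2" and M': "M' \<in> carrier_mat k n2"
  and MM: "\<forall>l<n1. \<forall>j<n2. M $$ (l,j) = (if l < k then M' $$ (l,j) else 0)"
  shows "u * M = C * M'"
proof (rule eq_matI)
  fix i j assume "i < dim_row (C * M')" "j < dim_col (C * M')"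
  then have ij: "i < n1" "j < n2" using C M' by auto
  have "(u * M) $$ (i,j) = (\<Sum>l<n1. u $$ (i,l) * M $$ (l,j))" by (rule mult_entry[OF u M ij])
  also have "\<dots> = (\<Sum>l<n1. if l < k then C $$ (i,l) * M' $$ (l,j) else 0)"
    using MM uC ij by (intro sum.cong, auto)
  also have "\<dots> = (\<Sum>l<k. C $$ (i,l) * M' $$ (l,j))" by (rule sum_if_less[OF kn])
  also have "\<dots> = (C * M') $$ (i,j)" by (rule mult_entry[OF C M' ij, symmetric])
  finally show "(u * M) $$ (i,j) = (C * M') $$ (i,j)" .
qed (use u M C M' in auto)

lemma real_zero: "z \<in> \<real> \<Longrightarrow> Re z = 0 \<Longrightarrow> z = 0"
  by (simp add: complex_eq_iff complex_is_Real_iff)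

lemma SL1: assumes Qc: "Q \<in> carrier_mat n1 k" and QO: "ctrans Q * Q = 1\<^sub>m k"
  and S: "svd k n2 B u' s' v" and f0: "\<forall>r. f r 0 = 0"
  shows "\<exists>u s. svd n1 n2 (Q * B) u s v \<and> u * Gm n1 n2 f s * ctrans v = Q * (u' * Gm k n2 f s' * ctrans v)"
proof -
  from S have u'u: "unitary_mat k u'" and vu: "unitary_mat n2 v" and s'c: "s' \<in> carrier_mat k n2"
    and s'd: "diagonal_mat s'" and Beq: "B = u' * s' * ctrans v"
    and s'r: "\<forall>i<min k n2. s' $$ (i,i) \<in> \<real> \<and> 0 \<le> Re (s' $$ (i,i))"
    and s'o: "\<forall>i i'. i \<le> i' \<and> i' < min k n2 \<longrightarrow> Re (s' $$ (i',i')) \<le> Re (s' $$ (i,i))"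
    unfolding svd_def by auto
  have u'c: "u' \<in> carrier_mat k k" and u'O: "ctrans u' * u' = 1\<^sub>m k" using u'u unfolding unitary_mat_def by auto
  have vc: "v \<in> carrier_mat n2 n2" using vu unfolding unitary_mat_def by auto
  have vHc: "ctrans v \<in> carrier_mat n2 n2" using vc by simp
  define C where "C = Q * u'"
  have Cc: "C \<in> carrier_mat n1 k" unfolding C_def using Qc u'c by simp
  have a1: "ctrans Q * (Q * u') = ctrans Q * Q * u'"
    using Qc u'c by (intro assoc_mult_mat[of _ k n1 _ k _ k, symmetric], auto)
  have "ctrans C * C = ctrans u' * ctrans Q * (Q * u')" unfolding C_def ctrans_mult[OF Qc u'c] ..
  also have "\<dots> = ctrans u' * (ctrans Q * (Q * u'))"
    using Qc u'c by (intro assoc_mult_mat[of _ k k _ n1 _ k], auto)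
  also have "\<dots> = ctrans u' * u'" unfolding a1 QO left_mult_one_mat[OF u'c] ..
  also have "\<dots> = 1\<^sub>m k" by (rule u'O)
  finally have CO: "ctrans C * C = 1\<^sub>m k" .
  obtain u where kn: "k \<le> n1" and uu: "unitary_mat n1 u" and uC: "\<forall>i<n1. \<forall>j<k. u $$ (i,j) = C $$ (i,j)"
    using completion[OF Cc CO] by blast
  have uc: "u \<in> carrier_mat n1 n1" using uu unfolding unitary_mat_def by auto
  define s where "s = mat n1 n2 (\<lambda>(i,j). if i < k then s' $$ (i,j) else 0)"
  have sc: "s \<in> carrier_mat n1 n2" unfolding s_def by simp
  have sd: "diagonal_mat s" using s'd s'c unfolding s_def diagonal_mat_def by auto
  have sr: "\<forall>i<min n1 n2. s $$ (i,i) \<in> \<real> \<and> 0 \<le> Re (s $$ (i,i))"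
    using s'r unfolding s_def by auto
  have so: "\<forall>i i'. i \<le> i' \<and> i' < min n1 n2 \<longrightarrow> Re (s $$ (i',i')) \<le> Re (s $$ (i,i))"
  proof (intro allI impI)
    fix i i' assume ii: "i \<le> i' \<and> i' < min n1 n2"
    show "Re (s $$ (i',i')) \<le> Re (s $$ (i,i))"
    proof (cases "i' < k")
      case True
      then show ?thesis using s'o ii unfolding s_def by auto
    next
      case False
      then have "s $$ (i',i') = 0" using ii unfolding s_def by auto
      then show ?thesis using sr ii by auto
    qed
  qed
  have us: "u * s = C * s'"
    by (rule pad_mult[OF uc Cc kn uC sc s'c], auto simp: s_def)
  have uG: "u * Gm n1 n2 f s = C * Gm k n2 f s'"
    by (rule pad_mult[OF uc Cc kn uC Gm_carrier Gm_carrier], auto simp: s_def Gm_def f0)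
  have "C * s' * ctrans v = Q * (u' * s') * ctrans v" unfolding C_def
    by (simp only: assoc_mult_mat[OF Qc u'c s'c])
  also have "\<dots> = Q * (u' * s' * ctrans v)" by (rule assoc_mult_mat[OF Qc mult_carrier_mat[OF u'c s'c] vHc])
  also have "\<dots> = Q * B" unfolding Beq ..
  finally have QB: "Q * B = u * s * ctrans v" unfolding us by simp
  have "u * Gm n1 n2 f s * ctrans v = Q * u' * Gm k n2 f s' * ctrans v" unfolding uG C_def ..
  also have "\<dots> = Q * (u' * Gm k n2 f s') * ctrans v"
    by (simp only: assoc_mult_mat[OF Qc u'c Gm_carrier])
  also have "\<dots> = Q * (u' * Gm k n2 f s' * ctrans v)"
    by (rule assoc_mult_mat[OF Qc mult_carrier_mat[OF u'c Gm_carrier] vHc])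
  finally have G: "u * Gm n1 n2 f s * ctrans v = Q * (u' * Gm k n2 f s' * ctrans v)" .
  have "svd n1 n2 (Q * B) u s v" unfolding svd_def using uu vu sc sd QB sr so by blast
  then show ?thesis using G by blast
qed


lemma rank_split: fixes s :: "complex mat" assumes r: "\<forall>i<m. s $$ (i,i) \<in> \<real> \<and> 0 \<le> Re (s $$ (i,i))"
  and o: "\<forall>i i'. i \<le> i' \<and> i' < m \<longrightarrow> Re (s $$ (i',i')) \<le> Re (s $$ (i,i))"
  shows "\<exists>rk\<le>m. \<forall>j<m. (s $$ (j,j) \<noteq> 0 \<longleftrightarrow> j < rk)"
proof -
  define P where "P r \<longleftrightarrow> r = m \<or> (r < m \<and> s $$ (r,r) = 0)" for r
  define rk where "rk = (LEAST r. P r)"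
  have Pm: "P m" unfolding P_def by simp
  have rkm: "rk \<le> m" unfolding rk_def using Pm by (rule Least_le)
  have Prk: "P rk" unfolding rk_def using Pm by (rule LeastI)
  have "\<forall>j<m. (s $$ (j,j) \<noteq> 0 \<longleftrightarrow> j < rk)"
  proof (intro allI impI)
    fix j assume j: "j < m"
    show "s $$ (j,j) \<noteq> 0 \<longleftrightarrow> j < rk"
    proof
      assume nz: "s $$ (j,j) \<noteq> 0"
      show "j < rk"
      proof (rule ccontr)
        assume "\<not> j < rk" then have rkj: "rk \<le> j" by simp
        then have rkm': "rk < m" using j by simp
        then have z: "s $$ (rk,rk) = 0" using Prk unfolding P_def by auto
        have "Re (s $$ (j,j)) \<le> Re (s $$ (rk,rk))" using o rkj j by blast
        then have "Re (s $$ (j,j)) = 0" using z r j by force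
        then have "s $$ (j,j) = 0" using r j real_zero by blast
        then show False using nz by simp
      qed
    next
      assume "j < rk"
      then have "\<not> P j" unfolding rk_def by (rule not_less_Least)
      then show "s $$ (j,j) \<noteq> 0" using j unfolding P_def by auto
    qed
  qed
  then show ?thesis using rkm by blast
qed

lemma SL2: assumes Qc: "Q \<in> carrier_mat n1 k" and QO: "ctrans Q * Q = 1\<^sub>m k" and Bc: "B \<in> carrier_mat k n2"
  and S: "svd n1 n2 (Q * B) u s v" and f0: "\<forall>r. f r 0 = 0"
  shows "\<exists>u' s'. svd k n2 B u' s' v \<and> Q * (u' * Gm k n2 f s' * ctrans v) = u * Gm n1 n2 f s * ctrans v"
proof -
  from S have uu: "unitary_mat n1 u" and vu: "unitary_mat n2 v" and sc: "s \<in> carrier_mat n1 n2"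
    and sd: "diagonal_mat s" and QB: "Q * B = u * s * ctrans v"
    and sr: "\<forall>i<min n1 n2. s $$ (i,i) \<in> \<real> \<and> 0 \<le> Re (s $$ (i,i))"
    and so: "\<forall>i i'. i \<le> i' \<and> i' < min n1 n2 \<longrightarrow> Re (s $$ (i',i')) \<le> Re (s $$ (i,i))"
    unfolding svd_def by auto
  have uc: "u \<in> carrier_mat n1 n1" and uO: "ctrans u * u = 1\<^sub>m n1" using uu unfolding unitary_mat_def by auto
  have vc: "v \<in> carrier_mat n2 n2" and vO1: "ctrans v * v = 1\<^sub>m n2" and vO2: "v * ctrans v = 1\<^sub>m n2"
    using vu unfolding unitary_mat_def by auto
  have vHc: "ctrans v \<in> carrier_mat n2 n2" using vc by simp
  have QHc: "ctrans Q \<in> carrier_mat k n1" using Qc by simp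
  have kn: "k \<le> n1" by (rule orth_le[OF Qc QO])
  obtain rk where rkm: "rk \<le> min n1 n2" and rk: "\<forall>j<min n1 n2. (s $$ (j,j) \<noteq> 0 \<longleftrightarrow> j < rk)"
    using rank_split[OF sr so] by blast
  define \<sigma> where "\<sigma> j = s $$ (j,j)" for j
  have se: "\<forall>l<n1. \<forall>j<n2. s $$ (l,j) = (if l = j \<and> j < rk then \<sigma> j else 0)"
  proof (intro allI impI)
    fix l j assume lj: "l < n1" "j < n2"
    show "s $$ (l,j) = (if l = j \<and> j < rk then \<sigma> j else 0)"
    proof (cases "l = j")
      case True
      then show ?thesis using rk lj unfolding \<sigma>_def by auto
    next
      case False
      then show ?thesis using sd sc lj unfolding diagonal_mat_def by auto
    qed
  qed
  have Ge: "\<forall>l<n1. \<forall>j<n2. Gm n1 n2 f s $$ (l,j) = (if l = j \<and> j < rk then complex_of_real (f j (Re (\<sigma> j))) else 0)"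
  proof (intro allI impI)
    fix l j assume lj: "l < n1" "j < n2"
    show "Gm n1 n2 f s $$ (l,j) = (if l = j \<and> j < rk then complex_of_real (f j (Re (\<sigma> j))) else 0)"
    proof (cases "l = j \<and> \<not> j < rk")
      case True
      then have "s $$ (j,j) = 0" using rk lj by auto
      then show ?thesis using True lj f0 unfolding Gm_def by auto
    next
      case False
      then show ?thesis using lj unfolding Gm_def \<sigma>_def by auto
    qed
  qed
  define W where "W = ctrans Q * u"
  have Wc: "W \<in> carrier_mat k n1" unfolding W_def using QHc uc by simp
  have usc: "u * s \<in> carrier_mat n1 n2" using uc sc by simp
  have Bvc: "B * v \<in> carrier_mat k n2" using Bc vc by simp
  have "u * s * ctrans v * v = u * s * (ctrans v * v)" by (rule assoc_mult_mat[OF usc vHc vc])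
  also have "\<dots> = u * s" unfolding vO1 by (rule right_mult_one_mat[OF usc])
  finally have F0: "u * s = Q * (B * v)" unfolding QB[symmetric] assoc_mult_mat[OF Qc Bc vc] by simp
  have "W * s = ctrans Q * (u * s)" unfolding W_def by (rule assoc_mult_mat[OF QHc uc sc])
  also have "\<dots> = ctrans Q * Q * (B * v)" unfolding F0 by (rule assoc_mult_mat[OF QHc Qc Bvc, symmetric])
  also have "\<dots> = B * v" unfolding QO by (rule left_mult_one_mat[OF Bvc])
  finally have F2: "W * s = B * v" .
  have F1: "Q * W * s = u * s" unfolding assoc_mult_mat[OF Qc Wc sc] F2 F0 ..
  have QWc: "Q * W \<in> carrier_mat n1 n1" using Qc Wc by simp
  have rkn1: "rk \<le> n1" and rkn2: "rk \<le> n2" using rkm by auto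
  have F3: "(Q * W) $$ (i,j) = u $$ (i,j)" if ij: "i < n1" "j < rk" for i j
  proof -
    have j2: "j < n2" using ij rkn2 by simp
    have "(Q * W * s) $$ (i,j) = (Q * W) $$ (i,j) * \<sigma> j"
      using diag_mult[OF QWc sc rkn1 se ij(1) j2] ij by simp
    moreover have "(u * s) $$ (i,j) = u $$ (i,j) * \<sigma> j"
      using diag_mult[OF uc sc rkn1 se ij(1) j2] ij by simp
    moreover have "\<sigma> j \<noteq> 0" using rk ij rkm unfolding \<sigma>_def by auto
    ultimately show ?thesis using F1 by simp
  qed
  define C where "C = mat k rk (\<lambda>(i,j). W $$ (i,j))"
  have Cc: "C \<in> carrier_mat k rk" unfolding C_def by simp
  have WW: "ctrans (Q * W) * (Q * W) = ctrans W * W"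
  proof -
    have "ctrans (Q * W) * (Q * W) = ctrans W * ctrans Q * (Q * W)" unfolding ctrans_mult[OF Qc Wc] ..
    also have "\<dots> = ctrans W * (ctrans Q * (Q * W))"
      by (rule assoc_mult_mat[OF ctrans_carrier[OF Wc] QHc mult_carrier_mat[OF Qc Wc]])
    also have "ctrans Q * (Q * W) = ctrans Q * Q * W" by (rule assoc_mult_mat[OF QHc Qc Wc, symmetric])
    finally show ?thesis unfolding QO left_mult_one_mat[OF Wc] .
  qed
  have CO: "ctrans C * C = 1\<^sub>m rk"
  proof (rule eq_matI)
    fix r t assume "r < dim_row (1\<^sub>m rk)" "t < dim_col (1\<^sub>m rk)"
    then have rt: "r < rk" "t < rk" by auto
    then have rt1: "r < n1" "t < n1" using rkn1 by auto
    have "(ctrans C * C) $$ (r,t) = (\<Sum>l<k. cnj (C $$ (l,r)) * C $$ (l,t))"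
      by (rule ctrans_mult_entry[OF Cc Cc rt])
    also have "\<dots> = (\<Sum>l<k. cnj (W $$ (l,r)) * W $$ (l,t))"
      unfolding C_def using rt by (intro sum.cong, auto)
    also have "\<dots> = (ctrans W * W) $$ (r,t)" by (rule ctrans_mult_entry[OF Wc Wc rt1, symmetric])
    also have "\<dots> = (\<Sum>i<n1. cnj ((Q * W) $$ (i,r)) * (Q * W) $$ (i,t))"
      unfolding WW[symmetric] by (rule ctrans_mult_entry[OF QWc QWc rt1])
    also have "\<dots> = (\<Sum>i<n1. cnj (u $$ (i,r)) * u $$ (i,t))"
      using F3 rt by (intro sum.cong, auto)
    also have "\<dots> = (ctrans u * u) $$ (r,t)" by (rule ctrans_mult_entry[OF uc uc rt1, symmetric])
    finally show "(ctrans C * C) $$ (r,t) = 1\<^sub>m rk $$ (r,t)" unfolding uO using rt rt1 by simp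
  qed (use Cc in auto)
  obtain u' where rkk: "rk \<le> k" and u'u: "unitary_mat k u'" and u'C: "\<forall>i<k. \<forall>j<rk. u' $$ (i,j) = C $$ (i,j)"
    using completion[OF Cc CO] by blast
  have u'c: "u' \<in> carrier_mat k k" using u'u unfolding unitary_mat_def by auto
  have u'W: "u' $$ (i,j) = W $$ (i,j)" if "i < k" "j < rk" for i j
    using u'C that unfolding C_def by auto
  define s' where "s' = mat k n2 (\<lambda>(i,j). s $$ (i,j))"
  have s'c: "s' \<in> carrier_mat k n2" unfolding s'_def by simp
  have s'e: "\<forall>l<k. \<forall>j<n2. s' $$ (l,j) = (if l = j \<and> j < rk then \<sigma> j else 0)"
    using se kn unfolding s'_def by auto
  have G'e: "\<forall>l<k. \<forall>j<n2. Gm k n2 f s' $$ (l,j) = (if l = j \<and> j < rk then complex_of_real (f j (Re (\<sigma> j))) else 0)"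
  proof (intro allI impI)
    fix l j assume lj: "l < k" "j < n2"
    have "Gm k n2 f s' $$ (l,j) = Gm n1 n2 f s $$ (l,j)"
      using lj kn unfolding Gm_def s'_def by auto
    then show "Gm k n2 f s' $$ (l,j) = (if l = j \<and> j < rk then complex_of_real (f j (Re (\<sigma> j))) else 0)"
      using Ge lj kn by auto
  qed
  have us': "u' * s' = W * s"
  proof (rule eq_matI)
    fix i j assume "i < dim_row (W * s)" "j < dim_col (W * s)"
    then have ij: "i < k" "j < n2" using Wc sc by auto
    show "(u' * s') $$ (i,j) = (W * s) $$ (i,j)"
      unfolding diag_mult[OF u'c s'c rkk s'e ij] diag_mult[OF Wc sc rkn1 se ij] using u'W ij by auto
  qed (use u'c s'c Wc sc in auto)
  have u'G: "u' * Gm k n2 f s' = W * Gm n1 n2 f s"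
  proof (rule eq_matI)
    fix i j assume "i < dim_row (W * Gm n1 n2 f s)" "j < dim_col (W * Gm n1 n2 f s)"
    then have ij: "i < k" "j < n2" using Wc by auto
    show "(u' * Gm k n2 f s') $$ (i,j) = (W * Gm n1 n2 f s) $$ (i,j)"
      unfolding diag_mult[OF u'c Gm_carrier rkk G'e ij] diag_mult[OF Wc Gm_carrier rkn1 Ge ij] using u'W ij by auto
  qed (use u'c Wc in auto)
  have QWG: "Q * W * Gm n1 n2 f s = u * Gm n1 n2 f s"
  proof (rule eq_matI)
    fix i j assume "i < dim_row (u * Gm n1 n2 f s)" "j < dim_col (u * Gm n1 n2 f s)"
    then have ij: "i < n1" "j < n2" using uc by auto
    show "(Q * W * Gm n1 n2 f s) $$ (i,j) = (u * Gm n1 n2 f s) $$ (i,j)"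
      unfolding diag_mult[OF QWc Gm_carrier rkn1 Ge ij] diag_mult[OF uc Gm_carrier rkn1 Ge ij] using F3 ij by auto
  qed (use uc QWc in auto)
  have "u' * s' * ctrans v = B * v * ctrans v" unfolding us' F2 ..
  also have "\<dots> = B * (v * ctrans v)" by (rule assoc_mult_mat[OF Bc vc vHc])
  also have "\<dots> = B" unfolding vO2 by (rule right_mult_one_mat[OF Bc])
  finally have Beq: "B = u' * s' * ctrans v" ..
  have "Q * (u' * Gm k n2 f s' * ctrans v) = Q * (W * Gm n1 n2 f s * ctrans v)" unfolding u'G ..
  also have "\<dots> = Q * (W * Gm n1 n2 f s) * ctrans v"
    by (rule assoc_mult_mat[OF Qc mult_carrier_mat[OF Wc Gm_carrier] vHc, symmetric])
  also have "\<dots> = u * Gm n1 n2 f s * ctrans v" unfolding assoc_mult_mat[OF Qc Wc Gm_carrier, symmetric] QWG ..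
  finally have G: "Q * (u' * Gm k n2 f s' * ctrans v) = u * Gm n1 n2 f s * ctrans v" .
  have s'd: "diagonal_mat s'" using s'e s'c unfolding diagonal_mat_def by auto
  have s'r: "\<forall>i<min k n2. s' $$ (i,i) \<in> \<real> \<and> 0 \<le> Re (s' $$ (i,i))"
    using sr kn unfolding s'_def by auto
  have s'o: "\<forall>i i'. i \<le> i' \<and> i' < min k n2 \<longrightarrow> Re (s' $$ (i',i')) \<le> Re (s' $$ (i,i))"
    using so kn unfolding s'_def by auto
  have "svd k n2 B u' s' v" unfolding svd_def using u'u vu s'c s'd Beq s'r s'o by blast
  then show ?thesis using G by blast
qed



lemma tz_self: "is_tensor m1 m2 ns F \<Longrightarrow> (\<lambda>idx. if valid_idx ns idx then F idx else 0\<^sub>m 0 0) = F"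
  by (rule ext) (auto dest: is_tensor_invalid)

lemma transf_valid_carrier: "is_tensor m1 m2 ns A \<Longrightarrow> valid_idx ns idx \<Longrightarrow> transf ns Us A idx \<in> carrier_mat m1 m2"
  by (rule is_tensor_valid[OF transf_tensor])

lemma tz_build: assumes G: "GU ns Us" and F: "\<And>idx. valid_idx ns idx \<Longrightarrow> F idx \<in> carrier_mat m1 m2"
  shows "is_tensor m1 m2 ns (transf_inv ns Us (\<lambda>idx. if valid_idx ns idx then F idx else 0\<^sub>m 0 0))"
    "valid_idx ns idx \<Longrightarrow> transf ns Us (transf_inv ns Us (\<lambda>idx. if valid_idx ns idx then F idx else 0\<^sub>m 0 0)) idx = F idx"
proof -
  have T: "is_tensor m1 m2 ns (\<lambda>idx. if valid_idx ns idx then F idx else 0\<^sub>m 0 0)" by (rule tz_tensor[OF F])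
  show "is_tensor m1 m2 ns (transf_inv ns Us (\<lambda>idx. if valid_idx ns idx then F idx else 0\<^sub>m 0 0))"
    by (rule transf_inv_tensor[OF T])
  show "valid_idx ns idx \<Longrightarrow> transf ns Us (transf_inv ns Us (\<lambda>idx. if valid_idx ns idx then F idx else 0\<^sub>m 0 0)) idx = F idx"
    unfolding transf_transf_inv[OF G T] by simp
qed

lemma tprod_props: assumes G: "GU ns Us" and A: "is_tensor m1 k ns A" and B: "is_tensor k m2 ns B"
  shows "is_tensor m1 m2 ns (tprod ns Us A B)"
    "valid_idx ns idx \<Longrightarrow> transf ns Us (tprod ns Us A B) idx = transf ns Us A idx * transf ns Us B idx"
proof -
  have F: "\<And>idx. valid_idx ns idx \<Longrightarrow> transf ns Us A idx * transf ns Us B idx \<in> carrier_mat m1 m2"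
    using transf_valid_carrier[OF A] transf_valid_carrier[OF B] by (meson mult_carrier_mat)
  show "is_tensor m1 m2 ns (tprod ns Us A B)" unfolding tprod_def by (rule tz_build(1)[OF G F])
  show "valid_idx ns idx \<Longrightarrow> transf ns Us (tprod ns Us A B) idx = transf ns Us A idx * transf ns Us B idx"
    unfolding tprod_def by (rule tz_build(2)[OF G F])
qed

lemma ttrans_props: assumes G: "GU ns Us" and A: "is_tensor m1 m2 ns A"
  shows "is_tensor m2 m1 ns (ttrans ns Us A)"
    "valid_idx ns idx \<Longrightarrow> transf ns Us (ttrans ns Us A) idx = ctrans (transf ns Us A idx)"
proof -
  have F: "\<And>idx. valid_idx ns idx \<Longrightarrow> ctrans (transf ns Us A idx) \<in> carrier_mat m2 m1"
    using transf_valid_carrier[OF A] by simp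
  show "is_tensor m2 m1 ns (ttrans ns Us A)" unfolding ttrans_def by (rule tz_build(1)[OF G F])
  show "valid_idx ns idx \<Longrightarrow> transf ns Us (ttrans ns Us A) idx = ctrans (transf ns Us A idx)"
    unfolding ttrans_def by (rule tz_build(2)[OF G F])
qed

lemma tident_props: assumes G: "GU ns Us"
  shows "is_tensor m m ns (tident ns Us m)"
    "valid_idx ns idx \<Longrightarrow> transf ns Us (tident ns Us m) idx = 1\<^sub>m m"
proof -
  have F: "\<And>idx. valid_idx ns idx \<Longrightarrow> 1\<^sub>m m \<in> carrier_mat m m" by simp
  show "is_tensor m m ns (tident ns Us m)" unfolding tident_def by (rule tz_build(1)[OF G F])
  show "valid_idx ns idx \<Longrightarrow> transf ns Us (tident ns Us m) idx = 1\<^sub>m m"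
    unfolding tident_def by (rule tz_build(2)[OF G F])
qed

lemma tensor_eqI: assumes G: "GU ns Us" and X: "is_tensor m1 m2 ns X" and Y: "is_tensor m1' m2' ns Y"
  and eq: "\<And>idx. valid_idx ns idx \<Longrightarrow> transf ns Us X idx = transf ns Us Y idx"
  shows "X = Y"
proof -
  have "transf ns Us X = transf ns Us Y"
  proof (rule ext)
    fix idx show "transf ns Us X idx = transf ns Us Y idx"
      using eq is_tensor_invalid[OF transf_tensor[OF X]] is_tensor_invalid[OF transf_tensor[OF Y]]
      by (cases "valid_idx ns idx") auto
  qed
  then show ?thesis using transf_inv_transf[OF G X] transf_inv_transf[OF G Y] by metis
qed

lemma mode_prod_fdiag: assumes A: "is_tensor m1 m2 ns A" and D: "f_diagonal ns A"
  shows "f_diagonal ns (mode_prod ns a M A)"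
  unfolding f_diagonal_def
proof (intro allI impI)
  fix idx assume v: "valid_idx ns idx"
  have c: "mode_prod ns a M A idx \<in> carrier_mat m1 m2" by (rule mode_prod_valid_carrier[OF A v])
  show "diagonal_mat (mode_prod ns a M A idx)" unfolding diagonal_mat_def
  proof (intro allI impI)
    fix i j assume ij: "i < dim_row (mode_prod ns a M A idx)" "j < dim_col (mode_prod ns a M A idx)" "i \<noteq> j"
    then have ij': "i < m1" "j < m2" using c by auto
    show "mode_prod ns a M A idx $$ (i,j) = 0"
      unfolding mode_prod_entry[OF A v ij']
    proof (rule sum.neutral, intro ballI)
      fix l assume l: "l \<in> {..<ns!a}"
      show "M $$ (idx ! a, l) * A (idx[a := l]) $$ (i, j) = 0"
      proof (cases "a < length ns")
        case True
        have v2: "valid_idx ns (idx[a := l])" using valid_upd[OF v True] l by simp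
        have "A (idx[a := l]) $$ (i, j) = 0" using D v2 is_tensor_valid[OF A v2] ij ij'
          unfolding f_diagonal_def diagonal_mat_def by auto
        then show ?thesis by simp
      next
        case False
        then have "idx[a := l] = idx" using v by (simp add: valid_idx_def list_update_beyond)
        then have "A (idx[a := l]) $$ (i, j) = 0" using D v is_tensor_valid[OF A v] ij ij'
          unfolding f_diagonal_def diagonal_mat_def by auto
        then show ?thesis by simp
      qed
    qed
  qed
qed

lemma foldl_fdiag: "is_tensor m1 m2 ns A \<Longrightarrow> f_diagonal ns A \<Longrightarrow>
   f_diagonal ns (foldl (\<lambda>T a. mode_prod ns a (h a) T) A xs)"
proof (induction xs arbitrary: A)
  case Nil then show ?case by simp
next
  case (Cons x xs)
  then show ?case using mode_prod_fdiag mode_prod_tensor by simp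
qed

lemma transf_inv_fdiag: "is_tensor m1 m2 ns A \<Longrightarrow> f_diagonal ns A \<Longrightarrow> f_diagonal ns (transf_inv ns Us A)"
  unfolding transf_inv_def by (rule foldl_fdiag)



lemma tsvd_slices: assumes T: "is_tsvd ns Us m1 m2 A U S V"
  shows "is_tensor m1 m1 ns U" "is_tensor m1 m2 ns S" "is_tensor m2 m2 ns V"
    "valid_idx ns idx \<Longrightarrow> svd m1 m2 (transf ns Us A idx) (transf ns Us U idx) (transf ns Us S idx) (transf ns Us V idx)"
proof -
  show U: "is_tensor m1 m1 ns U" and S: "is_tensor m1 m2 ns S" and V: "is_tensor m2 m2 ns V"
    using T unfolding is_tsvd_def by blast+
  assume v: "valid_idx ns idx"
  have c: "transf ns Us S idx \<in> carrier_mat m1 m2" by (rule transf_valid_carrier[OF S v])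
  from T v have "unitary_mat m1 (transf ns Us U idx) \<and> unitary_mat m2 (transf ns Us V idx) \<and>
        diagonal_mat (transf ns Us S idx) \<and>
        transf ns Us A idx = transf ns Us U idx * transf ns Us S idx * ctrans (transf ns Us V idx) \<and>
        (\<forall>i<min m1 m2. transf ns Us S idx $$ (i,i) \<in> \<real> \<and> 0 \<le> Re (transf ns Us S idx $$ (i,i))) \<and>
        (\<forall>i i'. i \<le> i' \<and> i' < min m1 m2 \<longrightarrow>
           Re (transf ns Us S idx $$ (i',i')) \<le> Re (transf ns Us S idx $$ (i,i)))"
    unfolding is_tsvd_def by blast
  then show "svd m1 m2 (transf ns Us A idx) (transf ns Us U idx) (transf ns Us S idx) (transf ns Us V idx)"
    unfolding svd_def using c by blast
qed

lemma tsvd_build: assumes G: "GU ns Us" and A: "is_tensor m1 m2 ns A"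
  and U: "is_tensor m1 m1 ns U" and S: "is_tensor m1 m2 ns S" and V: "is_tensor m2 m2 ns V"
  and sv: "\<And>idx. valid_idx ns idx \<Longrightarrow> svd m1 m2 (transf ns Us A idx) (transf ns Us U idx) (transf ns Us S idx) (transf ns Us V idx)"
  shows "is_tsvd ns Us m1 m2 A U S V"
proof -
  have orth: "torth ns Us m W" if W: "is_tensor m m ns W"
    and un: "\<And>idx. valid_idx ns idx \<Longrightarrow> unitary_mat m (transf ns Us W idx)" for m W
    unfolding torth_def
  proof
    show "tprod ns Us (ttrans ns Us W) W = tident ns Us m"
    proof (rule tensor_eqI[OF G tprod_props(1)[OF G ttrans_props(1)[OF G W] W] tident_props(1)[OF G]])
      fix idx assume v: "valid_idx ns idx"
      show "transf ns Us (tprod ns Us (ttrans ns Us W) W) idx = transf ns Us (tident ns Us m) idx"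
        unfolding tprod_props(2)[OF G ttrans_props(1)[OF G W] W v] ttrans_props(2)[OF G W v] tident_props(2)[OF G v]
        using un[OF v] unfolding unitary_mat_def by blast
    qed
    show "tprod ns Us W (ttrans ns Us W) = tident ns Us m"
    proof (rule tensor_eqI[OF G tprod_props(1)[OF G W ttrans_props(1)[OF G W]] tident_props(1)[OF G]])
      fix idx assume v: "valid_idx ns idx"
      show "transf ns Us (tprod ns Us W (ttrans ns Us W)) idx = transf ns Us (tident ns Us m) idx"
        unfolding tprod_props(2)[OF G W ttrans_props(1)[OF G W] v] ttrans_props(2)[OF G W v] tident_props(2)[OF G v]
        using un[OF v] unfolding unitary_mat_def by blast
    qed
  qed
  have oU: "torth ns Us m1 U" by (rule orth[OF U], insert sv, unfold svd_def, blast)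
  have oV: "torth ns Us m2 V" by (rule orth[OF V], insert sv, unfold svd_def, blast)
  have LS: "is_tensor m1 m2 ns (transf ns Us S)" by (rule transf_tensor[OF S])
  have "f_diagonal ns (transf ns Us S)" unfolding f_diagonal_def using sv unfolding svd_def by blast
  then have fd: "f_diagonal ns S" using transf_inv_fdiag[OF LS] transf_inv_transf[OF G S] by metis
  have UST: "is_tensor m1 m2 ns (tprod ns Us U S)" by (rule tprod_props(1)[OF G U S])
  have VT: "is_tensor m2 m2 ns (ttrans ns Us V)" by (rule ttrans_props(1)[OF G V])
  have Aeq: "A = tprod ns Us (tprod ns Us U S) (ttrans ns Us V)"
  proof (rule tensor_eqI[OF G A tprod_props(1)[OF G UST VT]])
    fix idx assume v: "valid_idx ns idx"
    show "transf ns Us A idx = transf ns Us (tprod ns Us (tprod ns Us U S) (ttrans ns Us V)) idx"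
      unfolding tprod_props(2)[OF G UST VT v] tprod_props(2)[OF G U S v] ttrans_props(2)[OF G V v]
      using sv[OF v] unfolding svd_def by blast
  qed
  show ?thesis unfolding is_tsvd_def using U S V oU oV fd Aeq sv unfolding svd_def by blast
qed

definition GT :: "nat list \<Rightarrow> complex mat list \<Rightarrow> (nat \<Rightarrow> nat \<Rightarrow> real) \<Rightarrow> real \<Rightarrow> real \<Rightarrow>
    nat \<Rightarrow> nat \<Rightarrow> tensor \<Rightarrow> tensor \<Rightarrow> tensor \<Rightarrow> tensor" where
  "GT ns Us w p \<tau> m1 m2 U S V = tprod ns Us (tprod ns Us U (transf_inv ns Us
              (\<lambda>idx. if valid_idx ns idx then
                 mat m1 m2 (\<lambda>(r,c). if r = c then
                   complex_of_real (GST (Re (transf ns Us S idx $$ (r,r))) (\<tau> * w r (lin_idx ns idx)) p)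
                   else 0)
               else 0\<^sub>m 0 0))) (ttrans ns Us V)"

lemma gtsvt_iff: "is_gtsvt ns Us w p \<tau> m1 m2 A X \<longleftrightarrow>
   (\<exists>U S V. is_tsvd ns Us m1 m2 A U S V \<and> X = GT ns Us w p \<tau> m1 m2 U S V)"
  unfolding is_gtsvt_def GT_def ..

definition fw :: "nat list \<Rightarrow> (nat \<Rightarrow> nat \<Rightarrow> real) \<Rightarrow> real \<Rightarrow> real \<Rightarrow> nat list \<Rightarrow> nat \<Rightarrow> real \<Rightarrow> real" where
  "fw ns w p \<tau> idx = (\<lambda>r x. GST x (\<tau> * w r (lin_idx ns idx)) p)"

lemma GT_props: assumes G: "GU ns Us" and U: "is_tensor m1 m1 ns U" and S: "is_tensor m1 m2 ns S"
  and V: "is_tensor m2 m2 ns V"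
  shows "is_tensor m1 m2 ns (GT ns Us w p \<tau> m1 m2 U S V)"
    "valid_idx ns idx \<Longrightarrow> transf ns Us (GT ns Us w p \<tau> m1 m2 U S V) idx =
       transf ns Us U idx * Gm m1 m2 (fw ns w p \<tau> idx) (transf ns Us S idx) * ctrans (transf ns Us V idx)"
proof -
  have eq: "(\<lambda>idx. if valid_idx ns idx then
                 mat m1 m2 (\<lambda>(r,c). if r = c then
                   complex_of_real (GST (Re (transf ns Us S idx $$ (r,r))) (\<tau> * w r (lin_idx ns idx)) p)
                   else 0)
               else 0\<^sub>m 0 0) = (\<lambda>idx. if valid_idx ns idx then Gm m1 m2 (fw ns w p \<tau> idx) (transf ns Us S idx) else 0\<^sub>m 0 0)"
    unfolding Gm_def fw_def by simp
  have F: "\<And>idx. valid_idx ns idx \<Longrightarrow> Gm m1 m2 (fw ns w p \<tau> idx) (transf ns Us S idx) \<in> carrier_mat m1 m2" by simp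
  define D where "D = transf_inv ns Us (\<lambda>idx. if valid_idx ns idx then Gm m1 m2 (fw ns w p \<tau> idx) (transf ns Us S idx) else 0\<^sub>m 0 0)"
  have D: "is_tensor m1 m2 ns D" unfolding D_def by (rule tz_build(1)[OF G F])
  have GTD: "GT ns Us w p \<tau> m1 m2 U S V = tprod ns Us (tprod ns Us U D) (ttrans ns Us V)"
    unfolding GT_def eq D_def ..
  have UD: "is_tensor m1 m2 ns (tprod ns Us U D)" by (rule tprod_props(1)[OF G U D])
  have VT: "is_tensor m2 m2 ns (ttrans ns Us V)" by (rule ttrans_props(1)[OF G V])
  show "is_tensor m1 m2 ns (GT ns Us w p \<tau> m1 m2 U S V)" unfolding GTD by (rule tprod_props(1)[OF G UD VT])
  assume v: "valid_idx ns idx"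
  show "transf ns Us (GT ns Us w p \<tau> m1 m2 U S V) idx =
       transf ns Us U idx * Gm m1 m2 (fw ns w p \<tau> idx) (transf ns Us S idx) * ctrans (transf ns Us V idx)"
  proof -
    have tD: "transf ns Us D idx = Gm m1 m2 (fw ns w p \<tau> idx) (transf ns Us S idx)"
      unfolding D_def using tz_build(2)[OF G F v] by simp
    show ?thesis
      unfolding GTD tprod_props(2)[OF G UD VT v] tprod_props(2)[OF G U D v] ttrans_props(2)[OF G V v] tD ..
  qed
qed

lemma fw0: assumes "\<tau> > 0" "\<forall>i j. w i j \<ge> 0" "0 < p" "p < 1"
  shows "\<forall>r. fw ns w p \<tau> idx r 0 = 0"
proof
  fix r
  define wt where "wt = \<tau> * w r (lin_idx ns idx)"
  have wt: "wt \<ge> 0" unfolding wt_def using assms by simp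
  have "0 \<le> gst_delta wt p" unfolding gst_delta_def using wt assms by simp
  then show "fw ns w p \<tau> idx r 0 = 0" unfolding fw_def GST_def wt_def[symmetric] by simp
qed



theorem proposition1:
  fixes ns :: "nat list" and Us :: "complex mat list"
    and n1 n2 k :: nat and \<tau> p :: real and w :: "nat \<Rightarrow> nat \<Rightarrow> real"
    and Q B :: tensor
  assumes d3: "length ns \<ge> 1"
    and ns_pos: "\<forall>a<length ns. ns ! a > 0"
    and n1: "n1 > 0" and n2: "n2 > 0" and k: "k > 0"
    and Us_len: "length Us = length ns"
    and Us: "\<forall>a<length ns. Us ! a \<in> carrier_mat (ns ! a) (ns ! a) \<and>
               (\<exists>\<alpha>>0. Us ! a * ctrans (Us ! a) = \<alpha> \<cdot>\<^sub>m 1\<^sub>m (ns ! a) \<and>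
                       ctrans (Us ! a) * Us ! a = \<alpha> \<cdot>\<^sub>m 1\<^sub>m (ns ! a))"
    and tau: "\<tau> > 0" and p: "0 < p" "p < 1"
    and w: "\<forall>i j. w i j \<ge> 0"
    and Q: "is_tensor n1 k ns Q" "real_tensor ns Q" "part_orth ns Us k Q"
    and B: "is_tensor k n2 ns B" "real_tensor ns B"
  shows "{X. is_gtsvt ns Us w p \<tau> n1 n2 (tprod ns Us Q B) X}
         = (\<lambda>Y. tprod ns Us Q Y) ` {Y. is_gtsvt ns Us w p \<tau> k n2 B Y}"
proof -
  have G: "GU ns Us" by (rule GU_from[OF Us])
  have QT: "is_tensor n1 k ns Q" by (rule Q(1))
  have BT: "is_tensor k n2 ns B" by (rule B(1))
  have QBT: "is_tensor n1 n2 ns (tprod ns Us Q B)" by (rule tprod_props(1)[OF G QT BT])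
  have QBs: "transf ns Us (tprod ns Us Q B) idx = transf ns Us Q idx * transf ns Us B idx"
    if v: "valid_idx ns idx" for idx by (rule tprod_props(2)[OF G QT BT v])
  have Qc: "transf ns Us Q idx \<in> carrier_mat n1 k" if v: "valid_idx ns idx" for idx
    by (rule transf_valid_carrier[OF QT v])
  have Bc: "transf ns Us B idx \<in> carrier_mat k n2" if v: "valid_idx ns idx" for idx
    by (rule transf_valid_carrier[OF BT v])
  have QO: "ctrans (transf ns Us Q idx) * transf ns Us Q idx = 1\<^sub>m k" if v: "valid_idx ns idx" for idx
  proof -
    have "transf ns Us (tprod ns Us (ttrans ns Us Q) Q) idx = transf ns Us (tident ns Us k) idx"
      using Q(3) unfolding part_orth_def by simp
    then show ?thesis
      unfolding tprod_props(2)[OF G ttrans_props(1)[OF G QT] QT v] ttrans_props(2)[OF G QT v]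
        tident_props(2)[OF G v] .
  qed
  have f0: "\<forall>r. fw ns w p \<tau> idx r 0 = 0" for idx by (rule fw0[OF tau w p])
  show ?thesis
  proof (intro equalityI subsetI)
    fix X assume "X \<in> {X. is_gtsvt ns Us w p \<tau> n1 n2 (tprod ns Us Q B) X}"
    then obtain U S V where T: "is_tsvd ns Us n1 n2 (tprod ns Us Q B) U S V"
      and X: "X = GT ns Us w p \<tau> n1 n2 U S V" unfolding gtsvt_iff by auto
    note UT = tsvd_slices(1)[OF T] and ST = tsvd_slices(2)[OF T] and VT = tsvd_slices(3)[OF T]
    have ex: "\<forall>idx. \<exists>us. valid_idx ns idx \<longrightarrow>
      (svd k n2 (transf ns Us B idx) (fst us) (snd us) (transf ns Us V idx) \<and>
       transf ns Us Q idx * (fst us * Gm k n2 (fw ns w p \<tau> idx) (snd us) * ctrans (transf ns Us V idx))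
         = transf ns Us U idx * Gm n1 n2 (fw ns w p \<tau> idx) (transf ns Us S idx) * ctrans (transf ns Us V idx))"
    proof
      fix idx
      show "\<exists>us. valid_idx ns idx \<longrightarrow>
      (svd k n2 (transf ns Us B idx) (fst us) (snd us) (transf ns Us V idx) \<and>
       transf ns Us Q idx * (fst us * Gm k n2 (fw ns w p \<tau> idx) (snd us) * ctrans (transf ns Us V idx))
         = transf ns Us U idx * Gm n1 n2 (fw ns w p \<tau> idx) (transf ns Us S idx) * ctrans (transf ns Us V idx))"
      proof (cases "valid_idx ns idx")
        case v: True
        have sv: "svd n1 n2 (transf ns Us Q idx * transf ns Us B idx) (transf ns Us U idx) (transf ns Us S idx) (transf ns Us V idx)"
          using tsvd_slices(4)[OF T v] unfolding QBs[OF v] .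
        from SL2[where f="fw ns w p \<tau> idx", OF Qc[OF v] QO[OF v] Bc[OF v] sv f0[of idx]] obtain u' s' where
          "svd k n2 (transf ns Us B idx) u' s' (transf ns Us V idx) \<and>
           transf ns Us Q idx * (u' * Gm k n2 (fw ns w p \<tau> idx) s' * ctrans (transf ns Us V idx))
           = transf ns Us U idx * Gm n1 n2 (fw ns w p \<tau> idx) (transf ns Us S idx) * ctrans (transf ns Us V idx)"
          by blast
        then show ?thesis by (intro exI[of _ "(u', s')"]) simp
      qed simp
    qed
    from choice[OF ex] obtain g where g: "\<And>idx. valid_idx ns idx \<Longrightarrow>
      (svd k n2 (transf ns Us B idx) (fst (g idx)) (snd (g idx)) (transf ns Us V idx) \<and>
       transf ns Us Q idx * (fst (g idx) * Gm k n2 (fw ns w p \<tau> idx) (snd (g idx)) * ctrans (transf ns Us V idx))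
         = transf ns Us U idx * Gm n1 n2 (fw ns w p \<tau> idx) (transf ns Us S idx) * ctrans (transf ns Us V idx))"
      by blast
    have Fu: "\<And>idx. valid_idx ns idx \<Longrightarrow> fst (g idx) \<in> carrier_mat k k"
      using g unfolding svd_def unitary_mat_def by blast
    have Fs: "\<And>idx. valid_idx ns idx \<Longrightarrow> snd (g idx) \<in> carrier_mat k n2"
      using g unfolding svd_def by blast
    define U' where "U' = transf_inv ns Us (\<lambda>idx. if valid_idx ns idx then fst (g idx) else 0\<^sub>m 0 0)"
    define S' where "S' = transf_inv ns Us (\<lambda>idx. if valid_idx ns idx then snd (g idx) else 0\<^sub>m 0 0)"
    have U'T: "is_tensor k k ns U'" unfolding U'_def by (rule tz_build(1)[OF G Fu])
    have S'T: "is_tensor k n2 ns S'" unfolding S'_def by (rule tz_build(1)[OF G Fs])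
    have tU': "transf ns Us U' idx = fst (g idx)" if v: "valid_idx ns idx" for idx
      unfolding U'_def using tz_build(2)[OF G Fu v] by simp
    have tS': "transf ns Us S' idx = snd (g idx)" if v: "valid_idx ns idx" for idx
      unfolding S'_def using tz_build(2)[OF G Fs v] by simp
    have T': "is_tsvd ns Us k n2 B U' S' V"
      by (rule tsvd_build[OF G BT U'T S'T VT], unfold tU' tS', rule conjunct1[OF g])
    define Y where "Y = GT ns Us w p \<tau> k n2 U' S' V"
    have Yg: "is_gtsvt ns Us w p \<tau> k n2 B Y" unfolding gtsvt_iff Y_def using T' by blast
    have YT: "is_tensor k n2 ns Y" unfolding Y_def by (rule GT_props(1)[OF G U'T S'T VT])
    have XT: "is_tensor n1 n2 ns X" unfolding X by (rule GT_props(1)[OF G UT ST VT])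
    have "X = tprod ns Us Q Y"
    proof (rule tensor_eqI[OF G XT tprod_props(1)[OF G QT YT]])
      fix idx assume v: "valid_idx ns idx"
      show "transf ns Us X idx = transf ns Us (tprod ns Us Q Y) idx"
        unfolding tprod_props(2)[OF G QT YT v] unfolding X Y_def
        unfolding GT_props(2)[OF G UT ST VT v] GT_props(2)[OF G U'T S'T VT v] tU'[OF v] tS'[OF v]
        using g[OF v] by simp
    qed
    then show "X \<in> (\<lambda>Y. tprod ns Us Q Y) ` {Y. is_gtsvt ns Us w p \<tau> k n2 B Y}" using Yg by blast
  next
    fix X assume "X \<in> (\<lambda>Y. tprod ns Us Q Y) ` {Y. is_gtsvt ns Us w p \<tau> k n2 B Y}"
    then obtain Y where Yg: "is_gtsvt ns Us w p \<tau> k n2 B Y" and X: "X = tprod ns Us Q Y" by blast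
    then obtain U' S' V where T': "is_tsvd ns Us k n2 B U' S' V"
      and Y: "Y = GT ns Us w p \<tau> k n2 U' S' V" unfolding gtsvt_iff by auto
    note U'T = tsvd_slices(1)[OF T'] and S'T = tsvd_slices(2)[OF T'] and VT = tsvd_slices(3)[OF T']
    have ex: "\<forall>idx. \<exists>us. valid_idx ns idx \<longrightarrow>
      (svd n1 n2 (transf ns Us (tprod ns Us Q B) idx) (fst us) (snd us) (transf ns Us V idx) \<and>
       fst us * Gm n1 n2 (fw ns w p \<tau> idx) (snd us) * ctrans (transf ns Us V idx)
        = transf ns Us Q idx * (transf ns Us U' idx * Gm k n2 (fw ns w p \<tau> idx) (transf ns Us S' idx) * ctrans (transf ns Us V idx)))"
    proof
      fix idx
      show "\<exists>us. valid_idx ns idx \<longrightarrow>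
      (svd n1 n2 (transf ns Us (tprod ns Us Q B) idx) (fst us) (snd us) (transf ns Us V idx) \<and>
       fst us * Gm n1 n2 (fw ns w p \<tau> idx) (snd us) * ctrans (transf ns Us V idx)
        = transf ns Us Q idx * (transf ns Us U' idx * Gm k n2 (fw ns w p \<tau> idx) (transf ns Us S' idx) * ctrans (transf ns Us V idx)))"
      proof (cases "valid_idx ns idx")
        case v: True
        from SL1[where f="fw ns w p \<tau> idx", OF Qc[OF v] QO[OF v] tsvd_slices(4)[OF T' v] f0[of idx]] obtain u s where
          "svd n1 n2 (transf ns Us Q idx * transf ns Us B idx) u s (transf ns Us V idx) \<and>
           u * Gm n1 n2 (fw ns w p \<tau> idx) s * ctrans (transf ns Us V idx)
           = transf ns Us Q idx * (transf ns Us U' idx * Gm k n2 (fw ns w p \<tau> idx) (transf ns Us S' idx) * ctrans (transf ns Us V idx))"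
          by blast
        then show ?thesis unfolding QBs[OF v] by (intro exI[of _ "(u, s)"]) simp
      qed simp
    qed
    from choice[OF ex] obtain g where g: "\<And>idx. valid_idx ns idx \<Longrightarrow>
      (svd n1 n2 (transf ns Us (tprod ns Us Q B) idx) (fst (g idx)) (snd (g idx)) (transf ns Us V idx) \<and>
       fst (g idx) * Gm n1 n2 (fw ns w p \<tau> idx) (snd (g idx)) * ctrans (transf ns Us V idx)
        = transf ns Us Q idx * (transf ns Us U' idx * Gm k n2 (fw ns w p \<tau> idx) (transf ns Us S' idx) * ctrans (transf ns Us V idx)))"
      by blast
    have Fu: "\<And>idx. valid_idx ns idx \<Longrightarrow> fst (g idx) \<in> carrier_mat n1 n1"
      using g unfolding svd_def unitary_mat_def by blast
    have Fs: "\<And>idx. valid_idx ns idx \<Longrightarrow> snd (g idx) \<in> carrier_mat n1 n2"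
      using g unfolding svd_def by blast
    define U where "U = transf_inv ns Us (\<lambda>idx. if valid_idx ns idx then fst (g idx) else 0\<^sub>m 0 0)"
    define S where "S = transf_inv ns Us (\<lambda>idx. if valid_idx ns idx then snd (g idx) else 0\<^sub>m 0 0)"
    have UT: "is_tensor n1 n1 ns U" unfolding U_def by (rule tz_build(1)[OF G Fu])
    have ST: "is_tensor n1 n2 ns S" unfolding S_def by (rule tz_build(1)[OF G Fs])
    have tU: "transf ns Us U idx = fst (g idx)" if v: "valid_idx ns idx" for idx
      unfolding U_def using tz_build(2)[OF G Fu v] by simp
    have tS: "transf ns Us S idx = snd (g idx)" if v: "valid_idx ns idx" for idx
      unfolding S_def using tz_build(2)[OF G Fs v] by simp
    have T: "is_tsvd ns Us n1 n2 (tprod ns Us Q B) U S V"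
      by (rule tsvd_build[OF G QBT UT ST VT], unfold tU tS, rule conjunct1[OF g])
    define X' where "X' = GT ns Us w p \<tau> n1 n2 U S V"
    have Xg: "is_gtsvt ns Us w p \<tau> n1 n2 (tprod ns Us Q B) X'" unfolding gtsvt_iff X'_def using T by blast
    have X'T: "is_tensor n1 n2 ns X'" unfolding X'_def by (rule GT_props(1)[OF G UT ST VT])
    have YT: "is_tensor k n2 ns Y" unfolding Y by (rule GT_props(1)[OF G U'T S'T VT])
    have "X' = X"
    proof (rule tensor_eqI[OF G X'T, of n1 n2])
      show "is_tensor n1 n2 ns X" unfolding X by (rule tprod_props(1)[OF G QT YT])
      fix idx assume v: "valid_idx ns idx"
      show "transf ns Us X' idx = transf ns Us X idx"
        unfolding X unfolding tprod_props(2)[OF G QT YT v] unfolding X'_def Y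
        unfolding GT_props(2)[OF G UT ST VT v] GT_props(2)[OF G U'T S'T VT v] tU[OF v] tS[OF v]
        using g[OF v] by simp
    qed
    then show "X \<in> {X. is_gtsvt ns Us w p \<tau> n1 n2 (tprod ns Us Q B) X}" using Xg by blast
  qed
qed

end
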